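(* Let $\Omega\subset\mathbb{R}^3$ be a domain with boundary $\partial\Omega$ and outward unit normal $\mathbf{n}$, and consider a non-isentropic, non-reactive Newtonian compressible fluid on $\Omega$ with state $\boldsymbol{x}=(\rho,\mathbf{v}^{\mathsf T},s)^{\mathsf T}$ governed by $$\partial_t\rho=-\mathrm{div}(\rho\mathbf{v}),$$ $$\partial_t\mathbf{v}=-\nabla\!\left(\tfrac12\mathbf{v}\cdot\mathbf{v}+h\right)-G_{\boldsymbol{\omega}}\mathbf{v}+T\nabla s-\frac{1}{\rho}\mathrm{Div}\,\boldsymbol{\tau},$$ $$\partial_t s=-\mathbf{v}\cdot\nabla s-\frac{\boldsymbol{\tau}}{\rho T}:\mathrm{Grad}\,\mathbf{v}-\frac{\mathbf{q}_s}{\rho T}\cdot\nabla T-\frac{1}{\rho}\mathrm{div}\,\mathbf{q}_s,$$ with total energy $\mathcal{H}=\int_\Omega \tfrac12\rho\,\mathbf{v}\cdot\mathbf{v}+\rho\,u(\rho,s)$ and efforts $\mathbf{e}=(e_\rho,\mathbf{e}_{\mathbf{v}}^{\mathsf T},e_s)^{\mathsf T}=(\delta_\rho\mathcal{H},\delta_{\mathbf{v}}\mathcal{H}^{\mathsf T},\delta_s\mathcal{H})^{\mathsf T}=(\tfrac12\mathbf{v}\cdot\mathbf{v}+h,\ \rho\mathbf{v}^{\mathsf T},\ \rho T)^{\mathsf T}$. Then these governing equations can be written as the pseudo infinite-dimensional port-Hamiltonian system $$\partial_t\boldsymbol{x}=\mathcal{J}\mathbf{e},\qquad \mathcal{J}=\begin{bmatrix}0&-\mathrm{div}&0\\-\nabla&-\frac{1}{\rho}G_{\boldsymbol{\omega}}&\mathcal{J}_{\boldsymbol{\tau}}\\0&-\mathcal{J}_{\boldsymbol{\tau}}^{*}&\mathcal{Q}_T-\mathcal{G}_T^{*}S_T\mathcal{G}_T\end{bmatrix},$$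 and along solutions the energy satisfies $$\frac{d\mathcal{H}}{dt}=\langle \mathbf{e}_\partial,\mathbf{f}_\partial\rangle_{\partial\Omega}=-\int_{\partial\Omega}\Big[e_\rho\,(\mathbf{e}_{\mathbf{v}}\cdot\mathbf{n})+\boldsymbol{\tau}:\big(\mathbf{v}\mathbf{n}^{\mathsf T}\big)+T\,(\mathbf{q}_s\cdot\mathbf{n})\Big],$$ i.e. the power supplied through $\partial\Omega$ with boundary flows $\mathbf{f}_\partial=\big(-(\mathbf{e}_{\mathbf{v}}\cdot\mathbf{n}),\,-\mathbf{v}\mathbf{n}^{\mathsf T},\,-(\mathbf{q}_s\cdot\mathbf{n})\big)\big|_{\partial\Omega}$ and boundary efforts $\mathbf{e}_\partial=\big(e_\rho,\,\boldsymbol{\tau},\,T\big)\big|_{\partial\Omega}$ (the middle pairing being the tensor product $:$).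
   Context: Notation: $\rho>0$ density, $\mathbf{v}$ velocity, $s$ specific entropy, $T>0$ temperature, $u(\rho,s)$ specific internal energy satisfying the Gibbs relation $du=-p\,d(1/\rho)+T\,ds$ (so $T=\partial_s u$, $p=\rho^2\partial_\rho u$ the static pressure), $h=u+p/\rho$ the enthalpy. The viscous tensor is $\boldsymbol{\tau}=-\mu(\mathrm{Grad}\,\mathbf{v}+(\mathrm{Grad}\,\mathbf{v})^{\mathsf T}-\frac23(\mathrm{div}\,\mathbf{v})I)-\kappa(\mathrm{div}\,\mathbf{v})I$ with shear and dilatational viscosities $\mu,\kappa$; the heat flux is $\mathbf{q}=-K\nabla T$ and the entropy flux is $\mathbf{q}_s=-\frac{K}{T}\nabla T$, with $K$ a nonnegative thermal conductivity matrix. The vorticity is $\boldsymbol{\omega}=\mathrm{curl}\,\mathbf{v}=(\omega_1,\omega_2,\omega_3)^{\mathsf T}$ and the gyroscope is the skew-symmetric matrix $G_{\boldsymbol{\omega}}=\begin{bmatrix}0&-\omega_3&\omega_2\\\omega_3&0&-\omega_1\\-\omega_2&\omega_1&0\end{bmatrix}$, so $G_{\boldsymbol{\omega}}\mathbf{v}=\boldsymbol{\omega}\times\mathbf{v}$. Operators: $\mathcal{J}_{\boldsymbol{\tau}}e=\nabla s\,\frac{e}{\rho}-\frac{1}{\rho}\mathrm{Div}\big(\frac{\boldsymbol{\tau}}{\rho T}e\big)$; $\mathcal{J}_{\boldsymbol{\tau}}^{*}\mathbf{w}=\nabla s\cdot\frac{\mathbf{w}}{\rho}+\frac{\boldsymbol{\tau}}{\rho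 T}:\mathrm{Grad}\frac{\mathbf{w}}{\rho}$; $S_T=K/T$; $\mathcal{G}_T e=-\nabla(e/\rho)$; $\mathcal{G}_T^{*}\mathbf{w}=\frac1\rho\mathrm{div}\,\mathbf{w}$; $\mathcal{Q}_T e=\frac{1}{\rho T}\|\nabla\frac{e}{\rho}\|^2_{S_T}$ where $\|\mathbf{a}\|_X^2=\mathbf{a}^{\mathsf T}X^{\mathsf T}\mathbf{a}$. $A:B=\mathrm{tr}(A^{\mathsf T}B)$; $\mathrm{Grad}$ and $\mathrm{Div}$ denote the gradient of a vector field and divergence of a tensor field, with $\int_\Omega(\mathrm{Div}A)\cdot\mathbf{u}+\int_\Omega A:\mathrm{Grad}\,\mathbf{u}=\int_{\partial\Omega}(A\mathbf{u})\cdot\mathbf{n}$ for symmetric $A$. "Pseudo port-Hamiltonian" refers to the fact that the coefficients of $\mathcal{J}$ depend on the effort $e_s=\rho T$. *)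

theory Defs
  imports "HOL-Analysis.Analysis"
begin

definition C1_on :: "'a::euclidean_space set \<Rightarrow> ('a \<Rightarrow> 'b::real_normed_vector) \<Rightarrow> bool" where
  "C1_on U f \<longleftrightarrow> (\<exists>f'. (\<forall>x\<in>U. (f has_derivative blinfun_apply (f' x)) (at x)) \<and> continuous_on U f')"

definition C2_on :: "'a::euclidean_space set \<Rightarrow> ('a \<Rightarrow> 'b::real_normed_vector) \<Rightarrow> bool" where
  "C2_on U f \<longleftrightarrow> (\<exists>f'. (\<forall>x\<in>U. (f has_derivative blinfun_apply (f' x)) (at x)) \<and> C1_on U f')"

definition C3_on :: "'a::euclidean_space set \<Rightarrow> ('a \<Rightarrow> 'b::real_normed_vector) \<Rightarrow> bool" where
  "C3_on U f \<longleftrightarrow> (\<exists>f'. (\<forall>x\<in>U. (f has_derivative blinfun_apply (f' x)) (at x)) \<and> C2_on U f')"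

definition pd :: "3 \<Rightarrow> (real^3 \<Rightarrow> 'b::real_normed_vector) \<Rightarrow> real^3 \<Rightarrow> 'b" where
  "pd i f x = frechet_derivative f (at x) (axis i 1)"

definition grad :: "(real^3 \<Rightarrow> real) \<Rightarrow> real^3 \<Rightarrow> real^3" where
  "grad f x = (\<chi> i. pd i f x)"

definition divg :: "(real^3 \<Rightarrow> real^3) \<Rightarrow> real^3 \<Rightarrow> real" where
  "divg F x = (\<Sum>i\<in>UNIV. pd i (\<lambda>y. F y $ i) x)"

definition Grad :: "(real^3 \<Rightarrow> real^3) \<Rightarrow> real^3 \<Rightarrow> real^3^3" where
  "Grad F x = (\<chi> i j. pd j (\<lambda>y. F y $ i) x)"

definition Divt :: "(real^3 \<Rightarrow> real^3^3) \<Rightarrow> real^3 \<Rightarrow> real^3" where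
  "Divt A x = (\<chi> i. \<Sum>j\<in>UNIV. pd j (\<lambda>y. A y $ i $ j) x)"

definition curl :: "(real^3 \<Rightarrow> real^3) \<Rightarrow> real^3 \<Rightarrow> real^3" where
  "curl F x = vector
     [pd 2 (\<lambda>y. F y $ 3) x - pd 3 (\<lambda>y. F y $ 2) x,
      pd 3 (\<lambda>y. F y $ 1) x - pd 1 (\<lambda>y. F y $ 3) x,
      pd 1 (\<lambda>y. F y $ 2) x - pd 2 (\<lambda>y. F y $ 1) x]"

text \<open>Gyroscope matrix of w (rows listed), so gyro w *v v = w x v.\<close>
definition gyro :: "real^3 \<Rightarrow> real^3^3" where
  "gyro w = vector
     [vector [0, - (w $ 3), w $ 2],
      vector [w $ 3, 0, - (w $ 1)],
      vector [- (w $ 2), w $ 1, 0]]"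

definition ddot :: "real^3^3 \<Rightarrow> real^3^3 \<Rightarrow> real" where
  "ddot A B = (\<Sum>i\<in>UNIV. \<Sum>j\<in>UNIV. A $ i $ j * B $ i $ j)"

definition outer :: "real^3 \<Rightarrow> real^3 \<Rightarrow> real^3^3" where
  "outer a b = (\<chi> i j. a $ i * b $ j)"

definition wnorm2 :: "real^3^3 \<Rightarrow> real^3 \<Rightarrow> real" where
  "wnorm2 X a = a \<bullet> (transpose X *v a)"

definition u_rho :: "(real \<Rightarrow> real \<Rightarrow> real) \<Rightarrow> real \<Rightarrow> real \<Rightarrow> real" where
  "u_rho u a b = deriv (\<lambda>r. u r b) a"

definition u_s :: "(real \<Rightarrow> real \<Rightarrow> real) \<Rightarrow> real \<Rightarrow> real \<Rightarrow> real" where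
  "u_s u a b = deriv (\<lambda>r. u a r) b"

definition temp :: "(real \<Rightarrow> real \<Rightarrow> real) \<Rightarrow> (real^3 \<Rightarrow> real) \<Rightarrow> (real^3 \<Rightarrow> real) \<Rightarrow> real^3 \<Rightarrow> real" where
  "temp u \<rho> s x = u_s u (\<rho> x) (s x)"

definition pres :: "(real \<Rightarrow> real \<Rightarrow> real) \<Rightarrow> (real^3 \<Rightarrow> real) \<Rightarrow> (real^3 \<Rightarrow> real) \<Rightarrow> real^3 \<Rightarrow> real" where
  "pres u \<rho> s x = (\<rho> x)\<^sup>2 * u_rho u (\<rho> x) (s x)"

definition enth :: "(real \<Rightarrow> real \<Rightarrow> real) \<Rightarrow> (real^3 \<Rightarrow> real) \<Rightarrow> (real^3 \<Rightarrow> real) \<Rightarrow> real^3 \<Rightarrow> real" where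
  "enth u \<rho> s x = u (\<rho> x) (s x) + pres u \<rho> s x / \<rho> x"

definition visc :: "real \<Rightarrow> real \<Rightarrow> (real^3 \<Rightarrow> real^3) \<Rightarrow> real^3 \<Rightarrow> real^3^3" where
  "visc \<mu> \<kappa> v x =
     - (\<mu> *\<^sub>R (Grad v x + transpose (Grad v x) - ((2/3) * divg v x) *\<^sub>R mat 1))
     - (\<kappa> * divg v x) *\<^sub>R mat 1"

definition entflux :: "real^3^3 \<Rightarrow> (real^3 \<Rightarrow> real) \<Rightarrow> real^3 \<Rightarrow> real^3" where
  "entflux K T x = - ((1 / T x) *\<^sub>R (K *v grad T x))"

definition rhs_rho :: "(real^3 \<Rightarrow> real) \<Rightarrow> (real^3 \<Rightarrow> real^3) \<Rightarrow> real^3 \<Rightarrow> real" where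
  "rhs_rho \<rho> v x = - divg (\<lambda>y. \<rho> y *\<^sub>R v y) x"

definition rhs_v :: "(real \<Rightarrow> real \<Rightarrow> real) \<Rightarrow> real \<Rightarrow> real \<Rightarrow>
    (real^3 \<Rightarrow> real) \<Rightarrow> (real^3 \<Rightarrow> real^3) \<Rightarrow> (real^3 \<Rightarrow> real) \<Rightarrow> real^3 \<Rightarrow> real^3" where
  "rhs_v u \<mu> \<kappa> \<rho> v s x =
     - grad (\<lambda>y. (1/2) * (v y \<bullet> v y) + enth u \<rho> s y) x
     - gyro (curl v x) *v v x
     + temp u \<rho> s x *\<^sub>R grad s x
     - (1 / \<rho> x) *\<^sub>R Divt (visc \<mu> \<kappa> v) x"

definition rhs_s :: "(real \<Rightarrow> real \<Rightarrow> real) \<Rightarrow> real \<Rightarrow> real \<Rightarrow> real^3^3 \<Rightarrow>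
    (real^3 \<Rightarrow> real) \<Rightarrow> (real^3 \<Rightarrow> real^3) \<Rightarrow> (real^3 \<Rightarrow> real) \<Rightarrow> real^3 \<Rightarrow> real" where
  "rhs_s u \<mu> \<kappa> K \<rho> v s x =
     (let T = temp u \<rho> s; qs = entflux K T in
      - (v x \<bullet> grad s x)
      - ddot ((1 / (\<rho> x * T x)) *\<^sub>R visc \<mu> \<kappa> v x) (Grad v x)
      - ((1 / (\<rho> x * T x)) *\<^sub>R qs x) \<bullet> grad T x
      - (1 / \<rho> x) * divg qs x)"

definition eff_rho :: "(real \<Rightarrow> real \<Rightarrow> real) \<Rightarrow> (real^3 \<Rightarrow> real) \<Rightarrow> (real^3 \<Rightarrow> real^3) \<Rightarrow> (real^3 \<Rightarrow> real) \<Rightarrow> real^3 \<Rightarrow> real" where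
  "eff_rho u \<rho> v s x = (1/2) * (v x \<bullet> v x) + enth u \<rho> s x"

definition eff_v :: "(real^3 \<Rightarrow> real) \<Rightarrow> (real^3 \<Rightarrow> real^3) \<Rightarrow> real^3 \<Rightarrow> real^3" where
  "eff_v \<rho> v x = \<rho> x *\<^sub>R v x"

definition eff_s :: "(real \<Rightarrow> real \<Rightarrow> real) \<Rightarrow> (real^3 \<Rightarrow> real) \<Rightarrow> (real^3 \<Rightarrow> real) \<Rightarrow> real^3 \<Rightarrow> real" where
  "eff_s u \<rho> s x = \<rho> x * temp u \<rho> s x"

definition Ham :: "(real^3) set \<Rightarrow> (real \<Rightarrow> real \<Rightarrow> real) \<Rightarrow> (real^3 \<Rightarrow> real) \<Rightarrow> (real^3 \<Rightarrow> real^3) \<Rightarrow> (real^3 \<Rightarrow> real) \<Rightarrow> real" where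
  "Ham \<Omega> u \<rho> v s = integral \<Omega> (\<lambda>x. (1/2) * \<rho> x * (v x \<bullet> v x) + \<rho> x * u (\<rho> x) (s x))"

definition J_tau :: "(real^3 \<Rightarrow> real) \<Rightarrow> (real^3 \<Rightarrow> real) \<Rightarrow> (real^3 \<Rightarrow> real^3^3) \<Rightarrow> (real^3 \<Rightarrow> real)
    \<Rightarrow> (real^3 \<Rightarrow> real) \<Rightarrow> real^3 \<Rightarrow> real^3" where
  "J_tau \<rho> s \<tau> T e x =
     (e x / \<rho> x) *\<^sub>R grad s x - (1 / \<rho> x) *\<^sub>R Divt (\<lambda>y. (e y / (\<rho> y * T y)) *\<^sub>R \<tau> y) x"

definition J_tau_adj :: "(real^3 \<Rightarrow> real) \<Rightarrow> (real^3 \<Rightarrow> real) \<Rightarrow> (real^3 \<Rightarrow> real^3^3) \<Rightarrow> (real^3 \<Rightarrow> real)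
    \<Rightarrow> (real^3 \<Rightarrow> real^3) \<Rightarrow> real^3 \<Rightarrow> real" where
  "J_tau_adj \<rho> s \<tau> T w x =
     grad s x \<bullet> ((1 / \<rho> x) *\<^sub>R w x)
     + ddot ((1 / (\<rho> x * T x)) *\<^sub>R \<tau> x) (Grad (\<lambda>y. (1 / \<rho> y) *\<^sub>R w y) x)"

definition S_T :: "real^3^3 \<Rightarrow> (real^3 \<Rightarrow> real) \<Rightarrow> real^3 \<Rightarrow> real^3^3" where
  "S_T K T x = (1 / T x) *\<^sub>R K"

definition G_T :: "(real^3 \<Rightarrow> real) \<Rightarrow> (real^3 \<Rightarrow> real) \<Rightarrow> real^3 \<Rightarrow> real^3" where
  "G_T \<rho> e x = - grad (\<lambda>y. e y / \<rho> y) x"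

definition G_T_adj :: "(real^3 \<Rightarrow> real) \<Rightarrow> (real^3 \<Rightarrow> real^3) \<Rightarrow> real^3 \<Rightarrow> real" where
  "G_T_adj \<rho> w x = (1 / \<rho> x) * divg w x"

definition Q_T :: "real^3^3 \<Rightarrow> (real^3 \<Rightarrow> real) \<Rightarrow> (real^3 \<Rightarrow> real) \<Rightarrow> (real^3 \<Rightarrow> real) \<Rightarrow> real^3 \<Rightarrow> real" where
  "Q_T K \<rho> T e x = (1 / (\<rho> x * T x)) * wnorm2 (S_T K T x) (grad (\<lambda>y. e y / \<rho> y) x)"

definition J_op :: "(real \<Rightarrow> real \<Rightarrow> real) \<Rightarrow> real \<Rightarrow> real \<Rightarrow> real^3^3 \<Rightarrow>
    (real^3 \<Rightarrow> real) \<Rightarrow> (real^3 \<Rightarrow> real^3) \<Rightarrow> (real^3 \<Rightarrow> real) \<Rightarrow>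
    (real^3 \<Rightarrow> real) \<Rightarrow> (real^3 \<Rightarrow> real^3) \<Rightarrow> (real^3 \<Rightarrow> real) \<Rightarrow> real^3 \<Rightarrow> real \<times> (real^3) \<times> real" where
  "J_op u \<mu> \<kappa> K \<rho> v s e\<^sub>\<rho> e\<^sub>v e\<^sub>s x =
     (let \<tau> = visc \<mu> \<kappa> v; T = temp u \<rho> s in
      ( - divg e\<^sub>v x,
        - grad e\<^sub>\<rho> x - (1 / \<rho> x) *\<^sub>R (gyro (curl v x) *v e\<^sub>v x) + J_tau \<rho> s \<tau> T e\<^sub>s x,
        - J_tau_adj \<rho> s \<tau> T e\<^sub>v x + Q_T K \<rho> T e\<^sub>s x
          - G_T_adj \<rho> (\<lambda>y. S_T K T y *v G_T \<rho> e\<^sub>s y) x))"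

definition bnd_pairing :: "(real^3) measure \<Rightarrow>
    (real^3 \<Rightarrow> real) \<Rightarrow> (real^3 \<Rightarrow> real^3^3) \<Rightarrow> (real^3 \<Rightarrow> real) \<Rightarrow>
    (real^3 \<Rightarrow> real) \<Rightarrow> (real^3 \<Rightarrow> real^3^3) \<Rightarrow> (real^3 \<Rightarrow> real) \<Rightarrow> real" where
  "bnd_pairing \<sigma> e1 E2 e3 f1 F2 f3 = (\<integral>x. e1 x * f1 x + ddot (E2 x) (F2 x) + e3 x * f3 x \<partial>\<sigma>)"

end

theory Submission
  imports Defs
begin

lemma fd_eq: "(f has_derivative blinfun_apply F) (at x) \<Longrightarrow> frechet_derivative f (at x) = blinfun_apply F"
  using frechet_derivative_at by metis

lemma fd_local:
  assumes "open X" "x \<in> X" "\<And>y. y \<in> X \<Longrightarrow> f y = g y"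
  shows "frechet_derivative f (at x) = frechet_derivative g (at x)"
proof -
  have "\<And>D. (f has_derivative D) (at x) \<longleftrightarrow> (g has_derivative D) (at x)"
    using has_derivative_transform_within_open assms by (metis)
  then show ?thesis unfolding frechet_derivative_def by simp
qed

lemma C1_diff: "C1_on U f \<Longrightarrow> x \<in> U \<Longrightarrow> f differentiable (at x)"
  unfolding C1_on_def differentiable_def by blast

lemma C1_cont: "C1_on U f \<Longrightarrow> continuous_on U f"
  by (meson C1_diff continuous_at_imp_continuous_on differentiable_imp_continuous_within)

lemma C1_iff:
  fixes f :: "'a::euclidean_space \<Rightarrow> 'b::real_normed_vector"
  assumes U: "open U"
  shows "C1_on U f \<longleftrightarrow> (\<forall>x\<in>U. f differentiable (at x)) \<and>
     (\<forall>b\<in>Basis. continuous_on U (\<lambda>x. frechet_derivative f (at x) b))"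
proof
  assume "C1_on U f"
  then obtain f' where d: "\<forall>x\<in>U. (f has_derivative blinfun_apply (f' x)) (at x)" and c: "continuous_on U f'"
    unfolding C1_on_def by blast
  have "continuous_on U (\<lambda>x. frechet_derivative f (at x) b)" for b
  proof -
    have "continuous_on U (\<lambda>x. blinfun_apply (f' x) b)"
      by (intro blinfun.continuous_on c continuous_on_const)
    then show ?thesis
      by (rule continuous_on_eq) (metis fd_eq d)
  qed
  then show "(\<forall>x\<in>U. f differentiable (at x)) \<and>
     (\<forall>b\<in>Basis. continuous_on U (\<lambda>x. frechet_derivative f (at x) b))"
    using d differentiable_def by blast
next
  assume H: "(\<forall>x\<in>U. f differentiable (at x)) \<and>
     (\<forall>b\<in>Basis. continuous_on U (\<lambda>x. frechet_derivative f (at x) b))"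
  define f' where "f' x = Blinfun (frechet_derivative f (at x))" for x
  have bl: "x \<in> U \<Longrightarrow> blinfun_apply (f' x) = frechet_derivative f (at x)" for x
    unfolding f'_def
    by (meson H bounded_linear_Blinfun_apply frechet_derivative_works has_derivative_bounded_linear)
  have d: "\<forall>x\<in>U. (f has_derivative blinfun_apply (f' x)) (at x)"
    using H bl frechet_derivative_works by fastforce
  have "continuous_on U f'"
  proof (rule continuous_on_blinfun_componentwise)
    fix i :: 'a assume "i \<in> Basis"
    then show "continuous_on U (\<lambda>x. blinfun_apply (f' x) i)"
      using H by (metis (no_types, lifting) bl continuous_on_eq)
  qed
  with d show "C1_on U f" unfolding C1_on_def by blast
qed

lemma C1_const: "C1_on U (\<lambda>x. c)"
  unfolding C1_on_def by (intro exI[of _ "\<lambda>x. 0"]) (auto intro!: derivative_eq_intros)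

lemma C1_add: "C1_on U f \<Longrightarrow> C1_on U g \<Longrightarrow> C1_on U (\<lambda>x. f x + g x)"
  unfolding C1_on_def
  apply (elim exE conjE)
  subgoal for f' g'
    by (intro exI[of _ "\<lambda>x. f' x + g' x"]) (auto intro!: derivative_eq_intros continuous_intros simp: blinfun.add_left)
  done

lemma C1_linear:
  assumes L: "bounded_linear L" and f: "C1_on U f"
  shows "C1_on U (\<lambda>x. L (f x))"
proof -
  obtain f' where d: "\<forall>x\<in>U. (f has_derivative blinfun_apply (f' x)) (at x)" and c: "continuous_on U f'"
    using f unfolding C1_on_def by blast
  have "\<forall>x\<in>U. ((\<lambda>x. L (f x)) has_derivative blinfun_apply (Blinfun L o\<^sub>L f' x)) (at x)"
  proof
    fix x assume x: "x \<in> U"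
    have eq: "blinfun_apply (Blinfun L o\<^sub>L f' x) = (\<lambda>h. L (f' x h))"
      by (rule ext) (simp add: bounded_linear_Blinfun_apply[OF L])
    show "((\<lambda>x. L (f x)) has_derivative blinfun_apply (Blinfun L o\<^sub>L f' x)) (at x)"
      unfolding eq using d x bounded_linear.has_derivative[OF L] by blast
  qed
  moreover have "continuous_on U (\<lambda>x. Blinfun L o\<^sub>L f' x)"
    by (intro continuous_intros c)
  ultimately show ?thesis unfolding C1_on_def by (intro exI[of _ "\<lambda>x. Blinfun L o\<^sub>L f' x"]) blast
qed

lemma C1_compose:
  assumes g: "C1_on W g" and f: "C1_on U f" and im: "f ` U \<subseteq> W"
  shows "C1_on U (\<lambda>x. g (f x))"
proof -
  obtain f' where df: "\<forall>x\<in>U. (f has_derivative blinfun_apply (f' x)) (at x)" and cf: "continuous_on U f'"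
    using f unfolding C1_on_def by blast
  obtain g' where dg: "\<forall>x\<in>W. (g has_derivative blinfun_apply (g' x)) (at x)" and cg: "continuous_on W g'"
    using g unfolding C1_on_def by blast
  have "\<forall>x\<in>U. ((\<lambda>x. g (f x)) has_derivative blinfun_apply (g' (f x) o\<^sub>L f' x)) (at x)"
  proof
    fix x assume x: "x \<in> U"
    have "((g \<circ> f) has_derivative (blinfun_apply (g' (f x)) \<circ> blinfun_apply (f' x))) (at x)"
      using diff_chain_at[of f "blinfun_apply (f' x)" x g "blinfun_apply (g' (f x))"] df dg x im by auto
    moreover have "blinfun_apply (g' (f x) o\<^sub>L f' x) = blinfun_apply (g' (f x)) \<circ> blinfun_apply (f' x)"
      by (rule ext) simp
    ultimately show "((\<lambda>x. g (f x)) has_derivative blinfun_apply (g' (f x) o\<^sub>L f' x)) (at x)"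
      by (simp add: o_def)
  qed
  moreover have "continuous_on U (\<lambda>x. g' (f x) o\<^sub>L f' x)"
    by (intro continuous_intros cf continuous_on_compose2[OF cg C1_cont[OF f] im])
  ultimately show ?thesis unfolding C1_on_def by (intro exI[of _ "\<lambda>x. g' (f x) o\<^sub>L f' x"]) blast
qed

lemma C1_bilinear:
  fixes f :: "'a::euclidean_space \<Rightarrow> 'b::real_normed_vector" and g :: "'a \<Rightarrow> 'c::real_normed_vector"
  assumes B: "bounded_bilinear B" and U: "open U" and f: "C1_on U f" and g: "C1_on U g"
  shows "C1_on U (\<lambda>x. B (f x) (g x))"
proof -
  have fd: "\<forall>x\<in>U. f differentiable (at x)" and fc: "\<forall>b\<in>Basis. continuous_on U (\<lambda>x. frechet_derivative f (at x) b)"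
    using f C1_iff[OF U] by auto
  have gd: "\<forall>x\<in>U. g differentiable (at x)" and gc: "\<forall>b\<in>Basis. continuous_on U (\<lambda>x. frechet_derivative g (at x) b)"
    using g C1_iff[OF U] by auto
  have D: "((\<lambda>x. B (f x) (g x)) has_derivative
        (\<lambda>h. B (f x) (frechet_derivative g (at x) h) + B (frechet_derivative f (at x) h) (g x))) (at x)"
    if "x \<in> U" for x
    using bounded_bilinear.FDERIV[OF B, of f "frechet_derivative f (at x)" x UNIV g "frechet_derivative g (at x)"]
      fd gd that unfolding frechet_derivative_works by blast
  show ?thesis
    unfolding C1_iff[OF U]
  proof (intro conjI ballI)
    fix x assume "x \<in> U" then show "(\<lambda>x. B (f x) (g x)) differentiable at x"
      using D differentiable_def by blast
  next
    fix b :: 'a assume b: "b \<in> Basis"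
    have "continuous_on U (\<lambda>x. B (f x) (frechet_derivative g (at x) b) + B (frechet_derivative f (at x) b) (g x))"
      by (intro continuous_intros bounded_bilinear.continuous_on[OF B] C1_cont[OF f] C1_cont[OF g] fc[rule_format, OF b] gc[rule_format, OF b])
    then show "continuous_on U (\<lambda>x. frechet_derivative (\<lambda>x. B (f x) (g x)) (at x) b)"
      by (rule continuous_on_eq) (simp add: frechet_derivative_at[OF D, symmetric])
  qed
qed

lemma C1_cong:
  assumes "open U" "\<And>x. x \<in> U \<Longrightarrow> f x = g x" "C1_on U f"
  shows "C1_on U g"
proof -
  obtain f' where d: "\<forall>x\<in>U. (f has_derivative blinfun_apply (f' x)) (at x)" and c: "continuous_on U f'"
    using assms unfolding C1_on_def by blast
  have "\<forall>x\<in>U. (g has_derivative blinfun_apply (f' x)) (at x)"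
    using d assms has_derivative_transform_within_open by metis
  with c show ?thesis unfolding C1_on_def by blast
qed

lemma C1_sum: "finite A \<Longrightarrow> (\<And>a. a \<in> A \<Longrightarrow> C1_on U (f a)) \<Longrightarrow> C1_on U (\<lambda>x. \<Sum>a\<in>A. f a x)"
proof (induction A rule: finite_induct)
  case empty then show ?case by (simp add: C1_const)
next
  case (insert a A)
  have "C1_on U (\<lambda>x. f a x + (\<Sum>a\<in>A. f a x))" by (rule C1_add) (use insert in auto)
  then show ?case using insert.hyps by simp
qed

lemma C1_C0: "C1_on U f \<Longrightarrow> continuous_on U f" by (rule C1_cont)

lemma C2_C1: "C2_on U f \<Longrightarrow> C1_on U f"
proof -
  assume "C2_on U f"
  then obtain f' where d: "\<forall>x\<in>U. (f has_derivative blinfun_apply (f' x)) (at x)" and c: "C1_on U f'"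
    unfolding C2_on_def by blast
  show ?thesis unfolding C1_on_def using d C1_cont[OF c] by (rule exI[where x=f', OF conjI])
qed

lemma C2_iff:
  fixes f :: "'a::euclidean_space \<Rightarrow> 'b::real_normed_vector"
  assumes U: "open U"
  shows "C2_on U f \<longleftrightarrow> (\<forall>x\<in>U. f differentiable (at x)) \<and>
     (\<forall>b\<in>Basis. C1_on U (\<lambda>x. frechet_derivative f (at x) b))"
proof
  assume "C2_on U f"
  then obtain f' where d: "\<forall>x\<in>U. (f has_derivative blinfun_apply (f' x)) (at x)" and c: "C1_on U f'"
    unfolding C2_on_def by blast
  have "C1_on U (\<lambda>x. frechet_derivative f (at x) b)" for b
  proof -
    have "C1_on U (\<lambda>x. blinfun_apply (f' x) b)"
      by (rule C1_linear[OF blinfun.bounded_linear_left c])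
    then show ?thesis
      by (rule C1_cong[OF U, rotated]) (metis fd_eq d)
  qed
  then show "(\<forall>x\<in>U. f differentiable (at x)) \<and>
     (\<forall>b\<in>Basis. C1_on U (\<lambda>x. frechet_derivative f (at x) b))"
    using d differentiable_def by blast
next
  assume H: "(\<forall>x\<in>U. f differentiable (at x)) \<and>
     (\<forall>b\<in>Basis. C1_on U (\<lambda>x. frechet_derivative f (at x) b))"
  define f' where "f' x = Blinfun (frechet_derivative f (at x))" for x
  have bl: "x \<in> U \<Longrightarrow> blinfun_apply (f' x) = frechet_derivative f (at x)" for x
    unfolding f'_def
    by (meson H bounded_linear_Blinfun_apply frechet_derivative_works has_derivative_bounded_linear)
  have d: "\<forall>x\<in>U. (f has_derivative blinfun_apply (f' x)) (at x)"
    using H bl frechet_derivative_works by fastforce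
  define M where "M b y = blinfun_scaleR_left y o\<^sub>L blinfun_inner_left b" for b :: 'a and y :: 'b
  have eq: "f' x = (\<Sum>b\<in>Basis. M b (frechet_derivative f (at x) b))" if x: "x \<in> U" for x
  proof (rule blinfun_euclidean_eqI)
    fix i :: 'a assume i: "i \<in> Basis"
    have "blinfun_apply (\<Sum>b\<in>Basis. M b (frechet_derivative f (at x) b)) i
        = (\<Sum>b\<in>Basis. (i \<bullet> b) *\<^sub>R frechet_derivative f (at x) b)"
      by (simp add: M_def blinfun.sum_left)
    also have "\<dots> = (\<Sum>b\<in>Basis. (if b = i then frechet_derivative f (at x) b else 0))"
      by (rule sum.cong) (auto simp: inner_Basis i)
    also have "\<dots> = frechet_derivative f (at x) i"
      using i by simp
    finally show "blinfun_apply (f' x) i = blinfun_apply (\<Sum>b\<in>Basis. M b (frechet_derivative f (at x) b)) i"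
      using bl[OF x] by simp
  qed
  have "C1_on U (\<lambda>x. \<Sum>b\<in>Basis. M b (frechet_derivative f (at x) b))"
  proof (rule C1_sum)
    fix b :: 'a assume b: "b \<in> Basis"
    show "C1_on U (\<lambda>x. M b (frechet_derivative f (at x) b))"
      unfolding M_def
      by (intro C1_bilinear[OF bounded_bilinear_blinfun_compose U] C1_linear[OF bounded_linear_blinfun_scaleR_left]
          C1_const) (use H b in auto)
  qed simp
  then have c: "C1_on U f'"
    by (rule C1_cong[OF U, rotated]) (simp add: eq)
  show "C2_on U f" unfolding C2_on_def using d c by (rule exI[where x=f', OF conjI])
qed

lemma C2_cong:
  assumes U: "open U" and eq: "\<And>x. x \<in> U \<Longrightarrow> f x = g x" and f: "C2_on U f"
  shows "C2_on U g"
proof -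
  have fl: "x \<in> U \<Longrightarrow> frechet_derivative f (at x) = frechet_derivative g (at x)" for x
    by (rule fd_local[OF U _ eq])
  have fd: "\<forall>x\<in>U. f differentiable (at x)" and fc: "\<forall>b\<in>Basis. C1_on U (\<lambda>x. frechet_derivative f (at x) b)"
    using f unfolding C2_iff[OF U] by blast+
  have "g differentiable (at x)" if x: "x \<in> U" for x
  proof -
    obtain D where "(f has_derivative D) (at x)" using fd x differentiable_def by blast
    then have "(g has_derivative D) (at x)"
      by (rule has_derivative_transform_within_open[OF _ U x eq])
    then show ?thesis using differentiable_def by blast
  qed
  moreover have "C1_on U (\<lambda>x. frechet_derivative g (at x) b)" if b: "b \<in> Basis" for b
    using fc b by (rule_tac C1_cong[OF U, of "\<lambda>x. frechet_derivative f (at x) b"]) (auto simp: fl)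
  ultimately show ?thesis using C2_iff[OF U] by blast
qed

lemma C2_const: "C2_on U (\<lambda>x. c)"
  unfolding C2_on_def by (intro exI[of _ "\<lambda>x. 0"]) (auto intro!: derivative_eq_intros C1_const)

lemma C2_add:
  assumes f: "C2_on U f" and g: "C2_on U g"
  shows "C2_on U (\<lambda>x. f x + g x)"
proof -
  obtain f' where df: "\<forall>x\<in>U. (f has_derivative blinfun_apply (f' x)) (at x)" and cf: "C1_on U f'"
    using f unfolding C2_on_def by blast
  obtain g' where dg: "\<forall>x\<in>U. (g has_derivative blinfun_apply (g' x)) (at x)" and cg: "C1_on U g'"
    using g unfolding C2_on_def by blast
  have "\<forall>x\<in>U. ((\<lambda>x. f x + g x) has_derivative blinfun_apply (f' x + g' x)) (at x)"
  proof
    fix x assume x: "x \<in> U"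
    have e: "blinfun_apply (f' x + g' x) = (\<lambda>h. f' x h + g' x h)"
      by (rule ext) (simp add: blinfun.add_left)
    show "((\<lambda>x. f x + g x) has_derivative blinfun_apply (f' x + g' x)) (at x)"
      unfolding e using df dg x by (intro has_derivative_add) auto
  qed
  moreover have "C1_on U (\<lambda>x. f' x + g' x)" by (rule C1_add[OF cf cg])
  ultimately show ?thesis unfolding C2_on_def by (rule exI[where x="\<lambda>x. f' x + g' x", OF conjI])
qed

lemma C2_sum: "finite A \<Longrightarrow> (\<And>a. a \<in> A \<Longrightarrow> C2_on U (f a)) \<Longrightarrow> C2_on U (\<lambda>x. \<Sum>a\<in>A. f a x)"
proof (induction A rule: finite_induct)
  case empty then show ?case by (simp add: C2_const)
next
  case (insert a A)
  have "C2_on U (\<lambda>x. f a x + (\<Sum>a\<in>A. f a x))" by (rule C2_add) (use insert in auto)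
  then show ?case using insert.hyps by simp
qed

lemma C2_linear:
  assumes L: "bounded_linear L" and f: "C2_on U f"
  shows "C2_on U (\<lambda>x. L (f x))"
proof -
  obtain f' where d: "\<forall>x\<in>U. (f has_derivative blinfun_apply (f' x)) (at x)" and c: "C1_on U f'"
    using f unfolding C2_on_def by blast
  have "\<forall>x\<in>U. ((\<lambda>x. L (f x)) has_derivative blinfun_apply (Blinfun L o\<^sub>L f' x)) (at x)"
  proof
    fix x assume x: "x \<in> U"
    have eq: "blinfun_apply (Blinfun L o\<^sub>L f' x) = (\<lambda>h. L (f' x h))"
      by (rule ext) (simp add: bounded_linear_Blinfun_apply[OF L])
    show "((\<lambda>x. L (f x)) has_derivative blinfun_apply (Blinfun L o\<^sub>L f' x)) (at x)"
      unfolding eq using d x bounded_linear.has_derivative[OF L] by blast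
  qed
  moreover have "C1_on U (\<lambda>x. Blinfun L o\<^sub>L f' x)"
    by (rule C1_linear[OF _ c]) (rule bounded_bilinear.bounded_linear_right[OF bounded_bilinear_blinfun_compose])
  ultimately show ?thesis unfolding C2_on_def by (rule exI[where x="\<lambda>x. Blinfun L o\<^sub>L f' x", OF conjI])
qed

lemma C2_compose:
  assumes U: "open U" and g: "C2_on W g" and f: "C2_on U f" and im: "f ` U \<subseteq> W"
  shows "C2_on U (\<lambda>x. g (f x))"
proof -
  obtain f' where df: "\<forall>x\<in>U. (f has_derivative blinfun_apply (f' x)) (at x)" and cf: "C1_on U f'"
    using f unfolding C2_on_def by blast
  obtain g' where dg: "\<forall>x\<in>W. (g has_derivative blinfun_apply (g' x)) (at x)" and cg: "C1_on W g'"
    using g unfolding C2_on_def by blast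
  have "\<forall>x\<in>U. ((\<lambda>x. g (f x)) has_derivative blinfun_apply (g' (f x) o\<^sub>L f' x)) (at x)"
  proof
    fix x assume x: "x \<in> U"
    have "((g \<circ> f) has_derivative (blinfun_apply (g' (f x)) \<circ> blinfun_apply (f' x))) (at x)"
      using diff_chain_at[of f "blinfun_apply (f' x)" x g "blinfun_apply (g' (f x))"] df dg x im by auto
    moreover have "blinfun_apply (g' (f x) o\<^sub>L f' x) = blinfun_apply (g' (f x)) \<circ> blinfun_apply (f' x)"
      by (rule ext) simp
    ultimately show "((\<lambda>x. g (f x)) has_derivative blinfun_apply (g' (f x) o\<^sub>L f' x)) (at x)"
      by (simp add: o_def)
  qed
  moreover have "C1_on U (\<lambda>x. g' (f x) o\<^sub>L f' x)"
    by (intro C1_bilinear[OF bounded_bilinear_blinfun_compose U] cf C1_compose[OF cg C2_C1[OF f] im])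
  ultimately show ?thesis unfolding C2_on_def by (rule exI[where x="\<lambda>x. g' (f x) o\<^sub>L f' x", OF conjI])
qed

lemma C2_bilinear:
  fixes f :: "'a::euclidean_space \<Rightarrow> 'b::real_normed_vector" and g :: "'a \<Rightarrow> 'c::real_normed_vector"
  assumes B: "bounded_bilinear B" and U: "open U" and f: "C2_on U f" and g: "C2_on U g"
  shows "C2_on U (\<lambda>x. B (f x) (g x))"
proof -
  have fd: "\<forall>x\<in>U. f differentiable (at x)" and fc: "\<forall>b\<in>Basis. C1_on U (\<lambda>x. frechet_derivative f (at x) b)"
    using f unfolding C2_iff[OF U] by blast+
  have gd: "\<forall>x\<in>U. g differentiable (at x)" and gc: "\<forall>b\<in>Basis. C1_on U (\<lambda>x. frechet_derivative g (at x) b)"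
    using g unfolding C2_iff[OF U] by blast+
  have D: "((\<lambda>x. B (f x) (g x)) has_derivative
        (\<lambda>h. B (f x) (frechet_derivative g (at x) h) + B (frechet_derivative f (at x) h) (g x))) (at x)"
    if "x \<in> U" for x
    using bounded_bilinear.FDERIV[OF B, of f "frechet_derivative f (at x)" x UNIV g "frechet_derivative g (at x)"]
      fd gd that unfolding frechet_derivative_works by blast
  show ?thesis
    unfolding C2_iff[OF U]
  proof (intro conjI ballI)
    fix x assume "x \<in> U" then show "(\<lambda>x. B (f x) (g x)) differentiable at x"
      using D differentiable_def by blast
  next
    fix b :: 'a assume b: "b \<in> Basis"
    have "C1_on U (\<lambda>x. B (f x) (frechet_derivative g (at x) b) + B (frechet_derivative f (at x) b) (g x))"
      by (intro C1_add C1_bilinear[OF B U] C2_C1[OF f] C2_C1[OF g] fc[rule_format, OF b] gc[rule_format, OF b])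
    then show "C1_on U (\<lambda>x. frechet_derivative (\<lambda>x. B (f x) (g x)) (at x) b)"
      by (rule C1_cong[OF U, rotated]) (simp add: frechet_derivative_at[OF D, symmetric])
  qed
qed

lemma C1_slice:
  assumes h: "C1_on (A \<times> B) h" and t: "t \<in> A"
  shows "C1_on B (\<lambda>x. h (t, x))"
proof -
  have "C1_on B (\<lambda>x. (t, x))"
    unfolding C1_on_def
    by (intro exI[of _ "\<lambda>x. Blinfun (\<lambda>k. (0, k))"])
       (auto intro!: derivative_eq_intros simp: bounded_linear_Blinfun_apply bounded_linear_Pair)
  then show ?thesis using C1_compose[OF h] t by blast
qed

lemma C2_slice:
  assumes B: "open B" and h: "C2_on (A \<times> B) h" and t: "t \<in> A"
  shows "C2_on B (\<lambda>x. h (t, x))"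
proof -
  have "C2_on B (\<lambda>x. (t, x))"
    unfolding C2_on_def
    by (intro exI[of _ "\<lambda>x. Blinfun (\<lambda>k. (0, k))"])
       (auto intro!: derivative_eq_intros C1_const simp: bounded_linear_Blinfun_apply bounded_linear_Pair)
  then show ?thesis using C2_compose[OF B h] t by blast
qed

lemma C3_fd:
  assumes W: "open W" and g: "C3_on W g"
  shows "C2_on W (\<lambda>p. frechet_derivative g (at p) b)" "C2_on W g"
proof -
  obtain g' where d: "\<forall>x\<in>W. (g has_derivative blinfun_apply (g' x)) (at x)" and c: "C2_on W g'"
    using g unfolding C3_on_def by blast
  have "C2_on W (\<lambda>x. blinfun_apply (g' x) b)"
    by (rule C2_linear[OF blinfun.bounded_linear_left c])
  then show "C2_on W (\<lambda>p. frechet_derivative g (at p) b)"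
    by (rule C2_cong[OF W, rotated]) (metis fd_eq d)
  show "C2_on W g" unfolding C2_on_def using d C2_C1[OF c] by (rule exI[where x=g', OF conjI])
qed

lemma C1_vec:
  fixes f :: "'i::finite \<Rightarrow> 'a::euclidean_space \<Rightarrow> real"
  assumes "\<And>i. C1_on U (f i)"
  shows "C1_on U (\<lambda>x. \<chi> i. f i x)"
proof -
  have eq: "(\<chi> i. f i x) = (\<Sum>i\<in>UNIV. f i x *\<^sub>R axis i 1)" for x
    by (simp add: vec_eq_iff axis_def if_distrib cong: if_cong)
  show ?thesis unfolding eq
    by (rule C1_sum, simp, rule C1_linear[OF bounded_linear_scaleR_left assms])
qed

lemma C1_nth: "C1_on U F \<Longrightarrow> C1_on U (\<lambda>x. F x $ i)"
  by (rule C1_linear[OF bounded_linear_vec_nth])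

lemma C2_nth: "C2_on U F \<Longrightarrow> C2_on U (\<lambda>x. F x $ i)"
  by (rule C2_linear[OF bounded_linear_vec_nth])

lemma diff_fd: "f differentiable (at x) \<Longrightarrow> (f has_derivative frechet_derivative f (at x)) (at x)"
  using frechet_derivative_works by blast

lemma pd_bilinear:
  assumes B: "bounded_bilinear B" and f: "f differentiable (at x)" and g: "g differentiable (at x)"
  shows "pd i (\<lambda>y. B (f y) (g y)) x = B (f x) (pd i g x) + B (pd i f x) (g x)"
proof -
  have "((\<lambda>y. B (f y) (g y)) has_derivative
        (\<lambda>h. B (f x) (frechet_derivative g (at x) h) + B (frechet_derivative f (at x) h) (g x))) (at x)"
    using bounded_bilinear.FDERIV[OF B diff_fd[OF f] diff_fd[OF g]] .
  then show ?thesis unfolding pd_def by (simp add: frechet_derivative_at[symmetric])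
qed

lemma pd_linear:
  assumes L: "bounded_linear L" and f: "f differentiable (at x)"
  shows "pd i (\<lambda>y. L (f y)) x = L (pd i f x)"
proof -
  have "((\<lambda>y. L (f y)) has_derivative (\<lambda>h. L (frechet_derivative f (at x) h))) (at x)"
    using bounded_linear.has_derivative[OF L diff_fd[OF f]] .
  then show ?thesis unfolding pd_def by (simp add: frechet_derivative_at[symmetric])
qed

lemma pd_add:
  assumes f: "f differentiable (at x)" and g: "g differentiable (at x)"
  shows "pd i (\<lambda>y. f y + g y) x = pd i f x + pd i g x"
proof -
  have "((\<lambda>y. f y + g y) has_derivative
        (\<lambda>h. frechet_derivative f (at x) h + frechet_derivative g (at x) h)) (at x)"
    using has_derivative_add[OF diff_fd[OF f] diff_fd[OF g]] .
  then show ?thesis unfolding pd_def by (simp add: frechet_derivative_at[symmetric])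
qed

lemma pd_sum:
  assumes "finite A" "\<And>a. a \<in> A \<Longrightarrow> f a differentiable (at x)"
  shows "pd i (\<lambda>y. \<Sum>a\<in>A. f a y) x = (\<Sum>a\<in>A. pd i (f a) x)"
proof -
  have "((\<lambda>y. \<Sum>a\<in>A. f a y) has_derivative
        (\<lambda>h. \<Sum>a\<in>A. frechet_derivative (f a) (at x) h)) (at x)"
    using assms by (intro has_derivative_sum) (auto intro: diff_fd)
  then show ?thesis unfolding pd_def by (simp add: frechet_derivative_at[symmetric])
qed

lemma pd_local:
  assumes "open X" "x \<in> X" "\<And>y. y \<in> X \<Longrightarrow> f y = g y"
  shows "pd i f x = pd i g x"
  unfolding pd_def using fd_local[OF assms] by simp

lemma diff_nth: "F differentiable (at x) \<Longrightarrow> (\<lambda>y. F y $ i) differentiable (at x)"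
  unfolding differentiable_def using bounded_linear.has_derivative[OF bounded_linear_vec_nth] by blast

lemma pd_nth: "F differentiable (at x) \<Longrightarrow> pd j (\<lambda>y. F y $ i) x = pd j F x $ i"
  by (rule pd_linear[OF bounded_linear_vec_nth])

lemma divg_scale:
  assumes f: "f differentiable (at x)" and G: "G differentiable (at x)"
  shows "divg (\<lambda>y. f y *\<^sub>R G y) x = f x * divg G x + grad f x \<bullet> G x"
proof -
  have "pd i (\<lambda>y. (f y *\<^sub>R G y) $ i) x = f x * pd i (\<lambda>y. G y $ i) x + pd i f x * G x $ i" for i
    using pd_bilinear[OF bounded_bilinear_mult f diff_nth[OF G, of i], of i] by simp
  then show ?thesis
    unfolding divg_def grad_def inner_vec_def
    by (simp add: sum.distrib sum_distrib_left)
qed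

lemma divg_add:
  assumes F: "F differentiable (at x)" and G: "G differentiable (at x)"
  shows "divg (\<lambda>y. F y + G y) x = divg F x + divg G x"
proof -
  have "pd i (\<lambda>y. (F y + G y) $ i) x = pd i (\<lambda>y. F y $ i) x + pd i (\<lambda>y. G y $ i) x" for i
    using pd_add[OF diff_nth[OF F] diff_nth[OF G]] by simp
  then show ?thesis unfolding divg_def by (simp add: sum.distrib)
qed

lemma divg_tv:
  assumes t: "\<And>i j. (\<lambda>y. \<tau> y $ i $ j) differentiable (at x)" and V: "V differentiable (at x)"
  shows "divg (\<lambda>y. \<chi> j. \<Sum>i\<in>UNIV. \<tau> y $ i $ j * V y $ i) x = V x \<bullet> Divt \<tau> x + ddot (\<tau> x) (Grad V x)"
proof -
  have "pd j (\<lambda>y. (\<chi> j. \<Sum>i\<in>UNIV. \<tau> y $ i $ j * V y $ i) $ j) x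
      = (\<Sum>i\<in>UNIV. \<tau> x $ i $ j * pd j (\<lambda>y. V y $ i) x + pd j (\<lambda>y. \<tau> y $ i $ j) x * V x $ i)" for j
  proof -
    have "pd j (\<lambda>y. (\<chi> j. \<Sum>i\<in>UNIV. \<tau> y $ i $ j * V y $ i) $ j) x = pd j (\<lambda>y. \<Sum>i\<in>UNIV. \<tau> y $ i $ j * V y $ i) x"
      by simp
    also have "\<dots> = (\<Sum>i\<in>UNIV. pd j (\<lambda>y. \<tau> y $ i $ j * V y $ i) x)"
      by (rule pd_sum) (auto intro!: differentiable_mult t diff_nth[OF V])
    also have "\<dots> = (\<Sum>i\<in>UNIV. \<tau> x $ i $ j * pd j (\<lambda>y. V y $ i) x + pd j (\<lambda>y. \<tau> y $ i $ j) x * V x $ i)"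
      by (rule sum.cong[OF refl]) (rule pd_bilinear[OF bounded_bilinear_mult t diff_nth[OF V]])
    finally show ?thesis .
  qed
  then have "divg (\<lambda>y. \<chi> j. \<Sum>i\<in>UNIV. \<tau> y $ i $ j * V y $ i) x
     = (\<Sum>j\<in>UNIV. \<Sum>i\<in>UNIV. \<tau> x $ i $ j * pd j (\<lambda>y. V y $ i) x) + 
       (\<Sum>j\<in>UNIV. \<Sum>i\<in>UNIV. pd j (\<lambda>y. \<tau> y $ i $ j) x * V x $ i)"
    unfolding divg_def by (simp add: sum.distrib)
  also have "(\<Sum>j\<in>UNIV. \<Sum>i\<in>UNIV. \<tau> x $ i $ j * pd j (\<lambda>y. V y $ i) x)
     = (\<Sum>i\<in>UNIV. \<Sum>j\<in>UNIV. \<tau> x $ i $ j * pd j (\<lambda>y. V y $ i) x)"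
    by (rule sum.swap)
  also have "(\<Sum>j\<in>UNIV. \<Sum>i\<in>UNIV. pd j (\<lambda>y. \<tau> y $ i $ j) x * V x $ i)
     = (\<Sum>i\<in>UNIV. \<Sum>j\<in>UNIV. pd j (\<lambda>y. \<tau> y $ i $ j) x * V x $ i)"
    by (rule sum.swap)
  finally show ?thesis
    unfolding Divt_def Grad_def ddot_def inner_vec_def
    by (simp add: sum_distrib_left sum_distrib_right mult.commute)
qed

lemma gyro_orth: "(v::real^3) \<bullet> (gyro w *v v) = 0"
  unfolding gyro_def inner_vec_def matrix_vector_mult_def
  by (simp add: sum_3 algebra_simps)

lemma mvt_bound:
  fixes g g' :: "real \<Rightarrow> real"
  assumes d: "\<And>y. y \<in> closed_segment x0 x \<Longrightarrow> (g has_real_derivative g' y) (at y)"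
    and b: "\<And>y. y \<in> closed_segment x0 x \<Longrightarrow> \<bar>g' y - g' x0\<bar> \<le> e"
  shows "\<bar>g x - g x0 - (x - x0) * g' x0\<bar> \<le> e * \<bar>x - x0\<bar>"
proof -
  consider "x = x0" | "x0 < x" | "x < x0" by linarith
  then show ?thesis
  proof cases
    case 1 then show ?thesis by simp
  next
    case 2
    then obtain z where z: "x0 < z" "z < x" "g x - g x0 = (x - x0) * g' z"
      using MVT2[of x0 x g g'] d by (auto simp: closed_segment_eq_real_ivl)
    have "\<bar>g' z - g' x0\<bar> \<le> e" using b z by (auto simp: closed_segment_eq_real_ivl)
    then have "\<bar>x - x0\<bar> * \<bar>g' z - g' x0\<bar> \<le> \<bar>x - x0\<bar> * e" by (simp add: mult_left_mono)
    moreover have "g x - g x0 - (x - x0) * g' x0 = (x - x0) * (g' z - g' x0)" using z by (simp add: algebra_simps)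
    ultimately show ?thesis by (metis abs_mult mult.commute)
  next
    case 3
    then obtain z where z: "x < z" "z < x0" "g x0 - g x = (x0 - x) * g' z"
      using MVT2[of x x0 g g'] d by (auto simp: closed_segment_eq_real_ivl)
    have "\<bar>g' z - g' x0\<bar> \<le> e" using b z by (auto simp: closed_segment_eq_real_ivl)
    then have "\<bar>x - x0\<bar> * \<bar>g' z - g' x0\<bar> \<le> \<bar>x - x0\<bar> * e" by (simp add: mult_left_mono)
    moreover have "g x - g x0 - (x - x0) * g' x0 = (x - x0) * (g' z - g' x0)" using z by (simp add: algebra_simps)
    ultimately show ?thesis by (metis abs_mult mult.commute)
  qed
qed

lemma cont_integrable:
  fixes g :: "'a::euclidean_space \<Rightarrow> real"
  assumes S: "S \<in> lmeasurable" and K: "compact K" "S \<subseteq> K" and c: "continuous_on K g"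
  shows "g integrable_on S"
proof -
  obtain B where B: "\<And>x. x \<in> K \<Longrightarrow> norm (g x) \<le> B"
    using compact_imp_bounded[OF compact_continuous_image[OF c K(1)]] unfolding bounded_iff by auto
  have m: "g \<in> borel_measurable (lebesgue_on S)"
    by (rule continuous_imp_measurable_on_sets_lebesgue[OF continuous_on_subset[OF c K(2)]]) (use S in auto)
  show ?thesis
    by (rule measurable_bounded_by_integrable_imp_integrable_real[OF m integrable_on_const[OF S, of B]])
       (use B K S in auto)
qed

lemma leibniz_real:
  fixes f fx :: "real \<Rightarrow> 'b::euclidean_space \<Rightarrow> real"
  assumes U: "open U" "convex U" "x0 \<in> U"
    and K: "compact K" "S \<subseteq> K" and S: "S \<in> lmeasurable"
    and d: "\<And>x t. x \<in> U \<Longrightarrow> t \<in> S \<Longrightarrow> ((\<lambda>x. f x t) has_real_derivative fx x t) (at x)"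
    and int: "\<And>x. x \<in> U \<Longrightarrow> f x integrable_on S"
    and fxint: "fx x0 integrable_on S"
    and c: "continuous_on (U \<times> K) (\<lambda>(x, t). fx x t)"
  shows "((\<lambda>x. integral S (f x)) has_real_derivative integral S (fx x0)) (at x0)"
  unfolding has_field_derivative_def
proof (rule has_derivativeI[OF bounded_linear_mult_right], rule tendstoI)
  fix e' :: real assume e': "e' > 0"
  define m where "m = measure lebesgue S"
  have m0: "m \<ge> 0" unfolding m_def by simp
  define e where "e = e' / (m + 1)"
  have e: "e > 0" using e' m0 unfolding e_def by simp
  obtain X0 where X0: "x0 \<in> X0" "open X0"
      "\<forall>x\<in>X0 \<inter> U. \<forall>t \<in> K. dist ((\<lambda>(x, t). fx x t) (x, t)) ((\<lambda>(x, t). fx x t) (x0, t)) \<le> e"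
    using continuous_on_prod_compactE[OF c K(1) U(3) e] by blast
  obtain r where r: "r > 0" "ball x0 r \<subseteq> X0 \<inter> U"
    using X0 U by (meson Int_iff open_Int open_contains_ball)
  have ev: "\<forall>\<^sub>F x in at x0. x \<in> ball x0 r \<and> x \<noteq> x0"
    using r unfolding eventually_at by (intro exI[of _ r]) (auto simp: dist_commute)
  show "\<forall>\<^sub>F x in at x0 within UNIV.
          dist ((integral S (f x) - integral S (f x0) - integral S (fx x0) * (x - x0)) /\<^sub>R norm (x - x0)) 0 < e'"
    using ev
  proof (rule eventually_mono)
    fix x assume x: "x \<in> ball x0 r \<and> x \<noteq> x0"
    have seg: "closed_segment x0 x \<subseteq> ball x0 r"
      using x r by (intro closed_segment_subset) auto
    have xU: "x \<in> U" using x r by auto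
    have bnd: "\<bar>f x t - f x0 t - (x - x0) * fx x0 t\<bar> \<le> e * \<bar>x - x0\<bar>" if t: "t \<in> S" for t
    proof (rule mvt_bound[of x0 x "\<lambda>y. f y t" "\<lambda>y. fx y t"])
      fix y assume "y \<in> closed_segment x0 x"
      then have y: "y \<in> X0 \<inter> U" using seg r by auto
      then show "((\<lambda>y. f y t) has_real_derivative fx y t) (at y)" using d t by auto
      show "\<bar>fx y t - fx x0 t\<bar> \<le> e" using X0(3) y t K(2) by (auto simp: dist_real_def)
    qed
    have eq: "integral S (f x) - integral S (f x0) - integral S (fx x0) * (x - x0)
        = integral S (\<lambda>t. f x t - f x0 t - (x - x0) * fx x0 t)"
    proof -
      have i1: "(\<lambda>t. f x t - f x0 t) integrable_on S"
        by (rule integrable_diff[OF int[OF xU] int[OF U(3)]])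
      have i2: "(\<lambda>t. (x - x0) * fx x0 t) integrable_on S"
        by (rule integrable_on_mult_right[OF fxint])
      have "integral S (\<lambda>t. f x t - f x0 t - (x - x0) * fx x0 t)
          = integral S (\<lambda>t. f x t - f x0 t) - integral S (\<lambda>t. (x - x0) * fx x0 t)"
        by (rule integral_diff[OF i1 i2])
      also have "\<dots> = integral S (f x) - integral S (f x0) - (x - x0) * integral S (fx x0)"
        using integral_diff[OF int[OF xU] int[OF U(3)]] by simp
      finally show ?thesis by (simp add: mult.commute)
    qed
    have "\<bar>integral S (\<lambda>t. f x t - f x0 t - (x - x0) * fx x0 t)\<bar> \<le> integral S (\<lambda>t. e * \<bar>x - x0\<bar>)"
      using int[OF xU] int[OF U(3)] fxint bnd
      by (intro integral_norm_bound_integral[where f="\<lambda>t. f x t - f x0 t - (x - x0) * fx x0 t", simplified])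
         (auto intro!: integrable_diff integrable_on_const[OF S] integrable_on_mult_right)
    also have "\<dots> = e * \<bar>x - x0\<bar> * m"
    proof -
      have "integral S (\<lambda>t. e * \<bar>x - x0\<bar>) = (e * \<bar>x - x0\<bar>) * integral S (\<lambda>t. 1::real)"
        using integral_mult_right[of S "e * \<bar>x - x0\<bar>" "\<lambda>t. 1"] by simp
      then show ?thesis using lmeasure_integral[OF S] unfolding m_def by (simp only:)
    qed
    also have "\<dots> < e' * \<bar>x - x0\<bar>"
    proof -
      have "e * m < e'" using e' m0 unfolding e_def by (simp add: field_simps)
      then show ?thesis using x by (simp add: mult.commute mult.left_commute)
    qed
    finally have "\<bar>integral S (f x) - integral S (f x0) - integral S (fx x0) * (x - x0)\<bar> < e' * \<bar>x - x0\<bar>"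
      using eq by simp
    then show "dist ((integral S (f x) - integral S (f x0) - integral S (fx x0) * (x - x0)) /\<^sub>R norm (x - x0)) 0 < e'"
      using x by (simp add: dist_real_def divide_simps abs_mult)
  qed
qed

lemma grad_local: "open X \<Longrightarrow> x \<in> X \<Longrightarrow> (\<And>y. y \<in> X \<Longrightarrow> f y = g y) \<Longrightarrow> grad f x = grad g x"
  unfolding grad_def using pd_local by (metis (no_types, lifting))

lemma divg_local: "open X \<Longrightarrow> x \<in> X \<Longrightarrow> (\<And>y. y \<in> X \<Longrightarrow> F y = G y) \<Longrightarrow> divg F x = divg G x"
  unfolding divg_def by (intro sum.cong refl pd_local) auto

lemma Divt_local: "open X \<Longrightarrow> x \<in> X \<Longrightarrow> (\<And>y. y \<in> X \<Longrightarrow> F y = G y) \<Longrightarrow> Divt F x = Divt G x"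
  unfolding Divt_def by (rule arg_cong[where f=vec_lambda], rule ext, intro sum.cong refl pd_local) auto

lemma Grad_local: "open X \<Longrightarrow> x \<in> X \<Longrightarrow> (\<And>y. y \<in> X \<Longrightarrow> F y = G y) \<Longrightarrow> Grad F x = Grad G x"
  unfolding Grad_def
  by (rule arg_cong[where f=vec_lambda], rule ext, rule arg_cong[where f=vec_lambda], rule ext, rule pd_local) auto

lemma wnorm2_eq: "wnorm2 X a = (X *v a) \<bullet> a"
  unfolding wnorm2_def by (simp, metis dot_lmul_matrix inner_commute)

lemma mvm_neg: "(M::real^'n^'m) *v (- a) = - (M *v a)"
  by (simp add: vec_eq_iff matrix_vector_mult_def sum_negf)

lemma mvm_scaleR: "(c *\<^sub>R (M::real^'n^'m)) *v a = c *\<^sub>R (M *v a)"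
  by (simp add: scaleR_matrix_vector_assoc)

lemma part1:
  assumes U: "open U" and x: "x \<in> U"
    and pos: "\<And>y. y \<in> U \<Longrightarrow> 0 < R y \<and> 0 < temp u R S y"
  shows "J_op u \<mu> \<kappa> K R V S (eff_rho u R V S) (eff_v R V) (eff_s u R S) x
       = (rhs_rho R V x, rhs_v u \<mu> \<kappa> R V S x, rhs_s u \<mu> \<kappa> K R V S x)"
proof -
  define T where "T = temp u R S"
  define \<tau> where "\<tau> = visc \<mu> \<kappa> V"
  have Rx: "R x > 0" and Tx: "T x > 0" using pos x unfolding T_def by auto
  have es: "eff_s u R S y / R y = T y" if "y \<in> U" for y
    using pos[OF that] unfolding eff_s_def T_def by simp
  have es2: "eff_s u R S y / (R y * T y) = 1" if "y \<in> U" for y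
    using pos[OF that] unfolding eff_s_def T_def by simp
  have ev: "(1 / R y) *\<^sub>R eff_v R V y = V y" if "y \<in> U" for y
    using pos[OF that] unfolding eff_v_def by simp
  have c1: "Divt (\<lambda>y. (eff_s u R S y / (R y * T y)) *\<^sub>R \<tau> y) x = Divt \<tau> x"
    by (rule Divt_local[OF U x]) (simp add: es2)
  have c2: "Grad (\<lambda>y. (1 / R y) *\<^sub>R eff_v R V y) x = Grad V x"
    by (rule Grad_local[OF U x]) (simp add: ev)
  have gT: "grad (\<lambda>z. eff_s u R S z / R z) y = grad T y" if "y \<in> U" for y
    by (rule grad_local[OF U that]) (simp add: es)
  have c3: "divg (\<lambda>y. S_T K T y *v G_T R (eff_s u R S) y) x = divg (entflux K T) x"
    by (rule divg_local[OF U x])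
       (simp add: S_T_def G_T_def entflux_def gT mvm_neg mvm_scaleR)
  have c4: "grad (\<lambda>y. eff_s u R S y / R y) x = grad T x" by (rule gT[OF x])
  have gy: "(1 / R x) *\<^sub>R (gyro w *v eff_v R V x) = gyro w *v V x" for w
    using Rx unfolding eff_v_def by (simp add: matrix_vector_mult_scaleR)
  show ?thesis
    unfolding J_op_def Let_def T_def[symmetric] \<tau>_def[symmetric]
  proof (intro prod_eqI conjI; simp only: fst_conv snd_conv)
    show "- divg (eff_v R V) x = rhs_rho R V x"
      unfolding rhs_rho_def eff_v_def by simp
    show "- grad (eff_rho u R V S) x - (1 / R x) *\<^sub>R (gyro (curl V x) *v eff_v R V x) +
          J_tau R S \<tau> T (eff_s u R S) x = rhs_v u \<mu> \<kappa> R V S x"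
      unfolding rhs_v_def J_tau_def c1 gy T_def[symmetric] \<tau>_def[symmetric]
      using Rx Tx by (simp add: eff_s_def eff_rho_def[abs_def] T_def)
    show "- J_tau_adj R S \<tau> T (eff_v R V) x + Q_T K R T (eff_s u R S) x -
          G_T_adj R (\<lambda>y. S_T K T y *v G_T R (eff_s u R S) y) x = rhs_s u \<mu> \<kappa> K R V S x"
      unfolding rhs_s_def J_tau_adj_def Q_T_def G_T_adj_def c2 c3 c4 Let_def T_def[symmetric] \<tau>_def[symmetric]
      using Rx Tx
      by (simp add: wnorm2_eq S_T_def entflux_def eff_v_def inner_commute algebra_simps
          mvm_scaleR)
  qed
qed

lemma lin2:
  assumes "linear (D :: real \<times> real \<Rightarrow> real)"
  shows "D (h, k) = h * D (1, 0) + k * D (0, 1)"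
proof -
  have "(h, k) = h *\<^sub>R (1::real, 0::real) + k *\<^sub>R (0, 1)" by simp
  then have "D (h, k) = D (h *\<^sub>R (1::real, 0::real) + k *\<^sub>R (0, 1))" by metis
  also have "\<dots> = D (h *\<^sub>R (1::real, 0::real)) + D (k *\<^sub>R (0, 1))"
    using assms by (rule linear_add)
  also have "\<dots> = h * D (1, 0) + k * D (0, 1)"
    using assms by (simp only: linear_scale real_scaleR_def)
  finally show ?thesis .
qed

lemma u_partials:
  fixes u :: "real \<Rightarrow> real \<Rightarrow> real"
  assumes W: "open W" and p: "(a, b) \<in> W" and d: "(\<lambda>(a, b). u a b) differentiable (at (a, b))"
  shows "((\<lambda>(a, b). u a b) has_derivative
           (\<lambda>(h, k). h * frechet_derivative (\<lambda>(a, b). u a b) (at (a, b)) (1, 0)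
                    + k * frechet_derivative (\<lambda>(a, b). u a b) (at (a, b)) (0, 1))) (at (a, b))"
    and "u_rho u a b = frechet_derivative (\<lambda>(a, b). u a b) (at (a, b)) (1, 0)"
    and "u_s u a b = frechet_derivative (\<lambda>(a, b). u a b) (at (a, b)) (0, 1)"
proof -
  define g where "g = (\<lambda>(a, b). u a b)"
  define D where "D = frechet_derivative g (at (a, b))"
  have gd: "(g has_derivative D) (at (a, b))" using d unfolding g_def D_def using frechet_derivative_works by blast
  have lin: "linear D" using gd has_derivative_linear by blast
  have eqD: "D = (\<lambda>(h, k). h * D (1, 0) + k * D (0, 1))"
  proof (rule ext)
    fix p :: "real \<times> real"
    obtain h k where p: "p = (h, k)" by fastforce
    show "D p = (\<lambda>(h, k). h * D (1, 0) + k * D (0, 1)) p"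
      unfolding p using lin2[OF lin, of h k] by (simp only: case_prod_conv)
  qed
  show "((\<lambda>(a, b). u a b) has_derivative
           (\<lambda>(h, k). h * frechet_derivative (\<lambda>(a, b). u a b) (at (a, b)) (1, 0)
                    + k * frechet_derivative (\<lambda>(a, b). u a b) (at (a, b)) (0, 1))) (at (a, b))"
    using gd unfolding g_def D_def eqD[unfolded g_def D_def, symmetric] .
  have r: "((\<lambda>r. u r b) has_real_derivative D (1, 0)) (at a)"
  proof -
    have "((\<lambda>r. g (r, b)) has_derivative (\<lambda>h. D (h, 0))) (at a)"
      using diff_chain_at[OF has_derivative_Pair[OF has_derivative_ident has_derivative_const] gd[unfolded]]
      by (simp add: o_def)
    moreover have "(\<lambda>h. D (h, 0)) = (\<lambda>h. D (1, 0) * h)"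
    proof
      fix h show "D (h, 0) = D (1, 0) * h" using lin2[OF lin, of h 0] by (simp only: mult_zero_left add_0_right mult.commute)
    qed
    ultimately show ?thesis unfolding has_field_derivative_def g_def by simp
  qed
  then show "u_rho u a b = frechet_derivative (\<lambda>(a, b). u a b) (at (a, b)) (1, 0)"
    unfolding u_rho_def D_def g_def by (rule DERIV_imp_deriv)
  have s: "((\<lambda>r. u a r) has_real_derivative D (0, 1)) (at b)"
  proof -
    have "((\<lambda>r. g (a, r)) has_derivative (\<lambda>h. D (0, h))) (at b)"
      using diff_chain_at[OF has_derivative_Pair[OF has_derivative_const has_derivative_ident] gd[unfolded]]
      by (simp add: o_def)
    moreover have "(\<lambda>h. D (0, h)) = (\<lambda>h. D (0, 1) * h)"
    proof
      fix h show "D (0, h) = D (0, 1) * h" using lin2[OF lin, of 0 h] by (simp only: mult_zero_left add_0_left mult.commute)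
    qed
    ultimately show ?thesis unfolding has_field_derivative_def g_def by simp
  qed
  then show "u_s u a b = frechet_derivative (\<lambda>(a, b). u a b) (at (a, b)) (0, 1)"
    unfolding u_s_def D_def g_def by (rule DERIV_imp_deriv)
qed

lemma C1_minus: "C1_on U f \<Longrightarrow> C1_on U (\<lambda>x. - f x)"
  by (rule C1_linear[OF bounded_linear_minus[OF bounded_linear_ident]])

lemma C1_sub: "C1_on U f \<Longrightarrow> C1_on U g \<Longrightarrow> C1_on U (\<lambda>x. f x - g x)"
  using C1_add[OF _ C1_minus, of U f g] by simp

lemma C1_cmult: "C1_on U f \<Longrightarrow> C1_on U (\<lambda>x. c * f x :: real)"
  by (rule C1_linear[OF bounded_linear_mult_right])

lemma C1_recip: "C1_on {0<..} (\<lambda>r::real. 1 / r)"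
proof -
  have D: "((\<lambda>r::real. 1 / r) has_derivative (*) (- 1 / r\<^sup>2)) (at r)" if "r > 0" for r
  proof -
    have "((\<lambda>r::real. 1 / r) has_real_derivative (- 1 / r\<^sup>2)) (at r)"
      using that by (auto intro!: derivative_eq_intros simp: power2_eq_square field_simps)
    then show ?thesis unfolding has_field_derivative_def .
  qed
  show ?thesis
    unfolding C1_iff[OF open_greaterThan]
  proof (intro conjI ballI)
    fix x :: real assume "x \<in> {0<..}" then show "(\<lambda>r. 1 / r) differentiable at x"
      using D differentiable_def by auto
  next
    fix b :: real assume b: "b \<in> Basis"
    have "continuous_on {0<..} (\<lambda>x::real. (- 1 / x\<^sup>2) * b)"
      by (intro continuous_intros) auto
    then show "continuous_on {0<..} (\<lambda>x. frechet_derivative (\<lambda>r. 1 / r) (at x) b)"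
      by (rule continuous_on_eq) (simp add: frechet_derivative_at[OF D, symmetric])
  qed
qed

lemma C1_inv:
  assumes "C1_on U f" "\<And>x. x \<in> U \<Longrightarrow> f x > 0"
  shows "C1_on U (\<lambda>x. 1 / f x :: real)"
  by (rule C1_compose[OF C1_recip assms(1)]) (use assms(2) in auto)

lemma C1_pd:
  fixes f :: "real^3 \<Rightarrow> real"
  assumes U: "open U" and f: "C2_on U f"
  shows "C1_on U (\<lambda>y. pd i f y)"
  using f unfolding C2_iff[OF U] pd_def by auto

lemma C2_pair:
  fixes f g :: "'a::euclidean_space \<Rightarrow> real"
  assumes "C2_on U f" "C2_on U g" "open U"
  shows "C2_on U (\<lambda>y. (f y, g y))"
proof -
  have "C2_on U (\<lambda>y. (f y, 0::real) + (0::real, g y))"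
    by (intro C2_add C2_linear[OF _ assms(1)] C2_linear[OF _ assms(2)])
       (auto intro!: bounded_linear_Pair bounded_linear_ident bounded_linear_zero)
  then show ?thesis by simp
qed

lemma regularity:
  fixes R S :: "real^3 \<Rightarrow> real" and V :: "real^3 \<Rightarrow> real^3" and u :: "real \<Rightarrow> real \<Rightarrow> real"
  assumes U: "open U" and R: "C2_on U R" and S: "C2_on U S" and V: "C2_on U V"
    and Rpos: "\<And>y. y \<in> U \<Longrightarrow> R y > 0" and Tpos: "\<And>y. y \<in> U \<Longrightarrow> temp u R S y > 0"
    and ureg: "C3_on ({0<..} \<times> UNIV) (\<lambda>(a, b). u a b)"
  shows "C1_on U (eff_rho u R V S)" "C1_on U (eff_v R V)" "C2_on U (temp u R S)" "C1_on U V"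
        "\<And>i j. C1_on U (\<lambda>y. visc \<mu> \<kappa> V y $ i $ j)" "C1_on U (entflux K (temp u R S))"
        "C1_on U (temp u R S)" "C1_on U R"
proof -
  define W :: "(real \<times> real) set" where "W = {0<..} \<times> UNIV"
  have W: "open W" unfolding W_def by (intro open_Times) auto
  define gu where "gu = (\<lambda>(a::real, b::real). u a b)"
  have gu2: "C2_on W gu" using C3_fd(2)[OF W ureg[folded W_def gu_def]] .
  define Ur where "Ur p = frechet_derivative gu (at p) (1, 0)" for p
  define Us where "Us p = frechet_derivative gu (at p) (0, 1)" for p
  have Ur2: "C2_on W Ur" unfolding Ur_def using C3_fd(1)[OF W ureg[folded W_def gu_def]] .
  have Us2: "C2_on W Us" unfolding Us_def using C3_fd(1)[OF W ureg[folded W_def gu_def]] .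
  define P where "P y = (R y, S y)" for y
  have P2: "C2_on U P" unfolding P_def by (rule C2_pair[OF R S U])
  have PW: "P ` U \<subseteq> W" using Rpos unfolding P_def W_def by auto
  have udiff: "gu differentiable (at (R y, S y))" if "y \<in> U" for y
    using C1_diff[OF C2_C1[OF gu2]] PW that unfolding P_def by auto
  have urho: "u_rho u (R y) (S y) = Ur (P y)" and us: "u_s u (R y) (S y) = Us (P y)" if y: "y \<in> U" for y
    using u_partials(2,3)[OF W _ udiff[OF y, unfolded gu_def]] PW y
    unfolding Ur_def Us_def P_def gu_def by auto
  have T2': "C2_on U (\<lambda>y. Us (P y))" by (rule C2_compose[OF U Us2 P2 PW])
  show T2: "C2_on U (temp u R S)"
    by (rule C2_cong[OF U _ T2']) (simp add: temp_def us)
  show T1: "C1_on U (temp u R S)" by (rule C2_C1[OF T2])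
  show R1: "C1_on U R" by (rule C2_C1[OF R])
  show V1: "C1_on U V" by (rule C2_C1[OF V])
  have "C1_on U (\<lambda>y. (1/2) * (V y \<bullet> V y) + (gu (P y) + R y * Ur (P y)))"
    by (intro C1_add C1_cmult C1_bilinear[OF bounded_bilinear_inner U V1 V1]
        C1_compose[OF C2_C1[OF gu2] C2_C1[OF P2] PW]
        C1_bilinear[OF bounded_bilinear_mult U R1 C1_compose[OF C2_C1[OF Ur2] C2_C1[OF P2] PW]])
  then show "C1_on U (eff_rho u R V S)"
  proof (rule C1_cong[OF U, rotated])
    fix y assume y: "y \<in> U"
    have "(R y)\<^sup>2 * Ur (P y) / R y = R y * Ur (P y)" using Rpos[OF y] by (simp add: power2_eq_square)
    then show "(1/2) * (V y \<bullet> V y) + (gu (P y) + R y * Ur (P y)) = eff_rho u R V S y"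
      unfolding eff_rho_def enth_def pres_def using urho[OF y] by (simp add: gu_def P_def)
  qed
  have "C1_on U (\<lambda>y. R y *\<^sub>R V y)" by (rule C1_bilinear[OF bounded_bilinear_scaleR U R1 V1])
  then show "C1_on U (eff_v R V)" unfolding eff_v_def[abs_def] .
  have G: "C1_on U (\<lambda>y. Grad V y $ i $ j)" for i j
    unfolding Grad_def using C1_pd[OF U C2_nth[OF V]] by simp
  have D: "C1_on U (\<lambda>y. divg V y)"
    unfolding divg_def by (rule C1_sum) (auto intro: C1_pd[OF U C2_nth[OF V]])
  show "C1_on U (\<lambda>y. visc \<mu> \<kappa> V y $ i $ j)" for i j
  proof -
    have "C1_on U (\<lambda>y. - (\<mu> * (Grad V y $ i $ j + Grad V y $ j $ i - (2/3 * divg V y) * (if i = j then 1 else 0)))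
                   - (\<kappa> * divg V y) * (if i = j then 1 else 0))"
      by (intro C1_sub C1_minus C1_cmult C1_add G C1_linear[OF bounded_linear_mult_left] D)
    then show ?thesis
      by (rule C1_cong[OF U, rotated]) (simp add: visc_def mat_def transpose_def)
  qed
  have gT: "C1_on U (\<lambda>y. grad (temp u R S) y)"
    unfolding grad_def by (rule C1_vec) (rule C1_pd[OF U T2])
  have "C1_on U (\<lambda>y. - ((1 / temp u R S y) *\<^sub>R (K *v grad (temp u R S) y)))"
    by (intro C1_minus C1_bilinear[OF bounded_bilinear_scaleR U] C1_inv[OF T1 Tpos]
        C1_linear[OF matrix_vector_mul_bounded_linear gT])
  then show "C1_on U (entflux K (temp u R S))" unfolding entflux_def[abs_def] .
qed

definition Fld :: "(real \<Rightarrow> real \<Rightarrow> real) \<Rightarrow> real \<Rightarrow> real \<Rightarrow> real^3^3 \<Rightarrow>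
    (real^3 \<Rightarrow> real) \<Rightarrow> (real^3 \<Rightarrow> real^3) \<Rightarrow> (real^3 \<Rightarrow> real) \<Rightarrow> real^3 \<Rightarrow> real^3" where
  "Fld u \<mu> \<kappa> K R V S y =
     eff_rho u R V S y *\<^sub>R eff_v R V y + (\<chi> j. \<Sum>i\<in>UNIV. visc \<mu> \<kappa> V y $ i $ j * V y $ i)
     + temp u R S y *\<^sub>R entflux K (temp u R S) y"

lemma ddot_scaleR: "ddot (c *\<^sub>R A) B = c * ddot A B"
  unfolding ddot_def by (simp add: sum_distrib_left mult.assoc)

lemma ddot_outer: "ddot A (outer a b) = (\<chi> j. \<Sum>i\<in>UNIV. A $ i $ j * a $ i) \<bullet> b"
proof -
  have "ddot A (outer a b) = (\<Sum>i\<in>UNIV. \<Sum>j\<in>UNIV. A $ i $ j * a $ i * b $ j)"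
    unfolding ddot_def outer_def by (simp add: mult.assoc)
  also have "\<dots> = (\<Sum>j\<in>UNIV. \<Sum>i\<in>UNIV. A $ i $ j * a $ i * b $ j)"
    by (rule sum.swap)
  also have "\<dots> = (\<chi> j. \<Sum>i\<in>UNIV. A $ i $ j * a $ i) \<bullet> b"
    unfolding inner_vec_def by (simp add: sum_distrib_right)
  finally show ?thesis .
qed

lemma energy_pointwise:
  fixes R S :: "real^3 \<Rightarrow> real" and V :: "real^3 \<Rightarrow> real^3" and u :: "real \<Rightarrow> real \<Rightarrow> real"
  assumes U: "open U" and R: "C2_on U R" and S: "C2_on U S" and V: "C2_on U V"
    and Rpos: "\<And>y. y \<in> U \<Longrightarrow> R y > 0" and Tpos: "\<And>y. y \<in> U \<Longrightarrow> temp u R S y > 0"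
    and ureg: "C3_on ({0<..} \<times> UNIV) (\<lambda>(a, b). u a b)"
    and x: "x \<in> U"
  shows "C1_on U (Fld u \<mu> \<kappa> K R V S)"
    and "eff_rho u R V S x * rhs_rho R V x + eff_v R V x \<bullet> rhs_v u \<mu> \<kappa> R V S x
         + eff_s u R S x * rhs_s u \<mu> \<kappa> K R V S x = - divg (Fld u \<mu> \<kappa> K R V S) x"
proof -
  note reg = regularity[OF U R S V Rpos Tpos ureg]
  define a where "a = eff_rho u R V S"
  define w where "w = eff_v R V"
  define Tm where "Tm = temp u R S"
  define \<tau> where "\<tau> = visc \<mu> \<kappa> V"
  define qs where "qs = entflux K Tm"
  have a1: "C1_on U a" and w1: "C1_on U w" and T1: "C1_on U Tm" and V1: "C1_on U V"
    and t1: "\<And>i j. C1_on U (\<lambda>y. \<tau> y $ i $ j)" and q1: "C1_on U qs"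
    using reg unfolding a_def w_def Tm_def \<tau>_def qs_def by auto
  have F2: "C1_on U (\<lambda>y. \<chi> j. \<Sum>i\<in>UNIV. \<tau> y $ i $ j * V y $ i)"
    by (rule C1_vec, rule C1_sum, simp, rule C1_bilinear[OF bounded_bilinear_mult U t1 C1_nth[OF V1]])
  have F1: "C1_on U (\<lambda>y. a y *\<^sub>R w y)" by (rule C1_bilinear[OF bounded_bilinear_scaleR U a1 w1])
  have F3: "C1_on U (\<lambda>y. Tm y *\<^sub>R qs y)" by (rule C1_bilinear[OF bounded_bilinear_scaleR U T1 q1])
  have F12: "C1_on U (\<lambda>y. a y *\<^sub>R w y + (\<chi> j. \<Sum>i\<in>UNIV. \<tau> y $ i $ j * V y $ i))"
    by (rule C1_add[OF F1 F2])
  have Feq: "Fld u \<mu> \<kappa> K R V S = (\<lambda>y. (a y *\<^sub>R w y + (\<chi> j. \<Sum>i\<in>UNIV. \<tau> y $ i $ j * V y $ i)) + Tm y *\<^sub>R qs y)"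
    unfolding Fld_def[abs_def] a_def w_def Tm_def \<tau>_def qs_def ..
  show "C1_on U (Fld u \<mu> \<kappa> K R V S)" unfolding Feq by (rule C1_add[OF F12 F3])
  have dv: "divg (Fld u \<mu> \<kappa> K R V S) x
      = (a x * divg w x + grad a x \<bullet> w x) + (V x \<bullet> Divt \<tau> x + ddot (\<tau> x) (Grad V x))
        + (Tm x * divg qs x + grad Tm x \<bullet> qs x)"
    unfolding Feq
    by (simp add: divg_add[OF C1_diff[OF F12 x] C1_diff[OF F3 x]]
        divg_add[OF C1_diff[OF F1 x] C1_diff[OF F2 x]]
        divg_scale[OF C1_diff[OF a1 x] C1_diff[OF w1 x]]
        divg_scale[OF C1_diff[OF T1 x] C1_diff[OF q1 x]]
        divg_tv[OF C1_diff[OF t1 x] C1_diff[OF V1 x]])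
  have Rx: "R x > 0" and Tx: "Tm x > 0" using Rpos[OF x] Tpos[OF x] unfolding Tm_def by auto
  have wx: "w x = R x *\<^sub>R V x" unfolding w_def eff_v_def ..
  have E1: "a x * rhs_rho R V x = - (a x * divg w x)"
    unfolding rhs_rho_def w_def eff_v_def[abs_def] by simp
  have gz: "w x \<bullet> (gyro (curl V x) *v V x) = 0" unfolding wx by (simp add: gyro_orth)
  have E2: "w x \<bullet> rhs_v u \<mu> \<kappa> R V S x = - (grad a x \<bullet> w x) + R x * Tm x * (V x \<bullet> grad S x) - V x \<bullet> Divt \<tau> x"
  proof -
    have eq: "rhs_v u \<mu> \<kappa> R V S x = - grad a x - gyro (curl V x) *v V x + Tm x *\<^sub>R grad S x - (1 / R x) *\<^sub>R Divt \<tau> x"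
      unfolding rhs_v_def a_def eff_rho_def[abs_def] Tm_def \<tau>_def ..
    show ?thesis unfolding eq using Rx gz
      by (simp add: inner_diff_right inner_add_right inner_minus_right wx inner_commute algebra_simps)
  qed
  have E3: "eff_s u R S x * rhs_s u \<mu> \<kappa> K R V S x
      = - (R x * Tm x * (V x \<bullet> grad S x)) - ddot (\<tau> x) (Grad V x) - qs x \<bullet> grad Tm x - Tm x * divg qs x"
  proof -
    have eq: "rhs_s u \<mu> \<kappa> K R V S x = - (V x \<bullet> grad S x) - ddot ((1 / (R x * Tm x)) *\<^sub>R \<tau> x) (Grad V x)
         - ((1 / (R x * Tm x)) *\<^sub>R qs x) \<bullet> grad Tm x - (1 / R x) * divg qs x"
      unfolding rhs_s_def Let_def Tm_def \<tau>_def qs_def ..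
    have eq2: "eff_s u R S x = R x * Tm x" unfolding eff_s_def Tm_def ..
    show ?thesis unfolding eq eq2 using Rx Tx
      by (simp add: ddot_scaleR algebra_simps)
  qed
  show "eff_rho u R V S x * rhs_rho R V x + eff_v R V x \<bullet> rhs_v u \<mu> \<kappa> R V S x
         + eff_s u R S x * rhs_s u \<mu> \<kappa> K R V S x = - divg (Fld u \<mu> \<kappa> K R V S) x"
    unfolding a_def[symmetric] w_def[symmetric] dv E1 E2 E3
    by (simp add: inner_commute algebra_simps)
qed

lemma tslice:
  fixes P :: "real \<times> 'a::euclidean_space \<Rightarrow> 'b::real_normed_vector"
  assumes P: "C1_on (I \<times> U) P" and t: "t \<in> I" and y: "y \<in> U"
  shows "((\<lambda>t. P (t, y)) has_vector_derivative frechet_derivative P (at (t, y)) (1, 0)) (at t)"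
proof -
  define D where "D = frechet_derivative P (at (t, y))"
  have d: "(P has_derivative D) (at (t, y))"
    using C1_diff[OF P] t y unfolding D_def using frechet_derivative_works by blast
  have lin: "linear D" using d has_derivative_linear by blast
  have "((\<lambda>t. P (t, y)) has_derivative (\<lambda>h. D (h, 0))) (at t)"
    using diff_chain_at[OF has_derivative_Pair[OF has_derivative_ident has_derivative_const] d]
    by (simp add: o_def)
  moreover have "(\<lambda>h. D (h, 0)) = (\<lambda>h. h *\<^sub>R D (1, 0))"
  proof
    fix h :: real
    have "D (h, 0) = D (h *\<^sub>R (1, 0))" by simp
    also have "\<dots> = h *\<^sub>R D (1, 0)" by (rule linear_scale[OF lin])
    finally show "D (h, 0) = h *\<^sub>R D (1, 0)" .
  qed
  ultimately show ?thesis unfolding has_vector_derivative_def D_def by simp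
qed

lemma hf_deriv:
  fixes r s :: "real \<Rightarrow> real" and v :: "real \<Rightarrow> real^3" and u :: "real \<Rightarrow> real \<Rightarrow> real"
  assumes dr: "(r has_real_derivative rt) (at t)" and ds: "(s has_real_derivative st) (at t)"
    and dv: "(v has_vector_derivative vt) (at t)"
    and du: "((\<lambda>(a, b). u a b) has_derivative (\<lambda>(h, k). h * Ur + k * Us)) (at (r t, s t))"
  shows "((\<lambda>t. (1/2) * r t * (v t \<bullet> v t) + r t * u (r t) (s t)) has_real_derivative
          ((1/2) * (v t \<bullet> v t) + u (r t) (s t) + r t * Ur) * rt + (r t *\<^sub>R v t) \<bullet> vt + r t * Us * st) (at t)"
proof -
  have dvv: "((\<lambda>t. v t \<bullet> v t) has_real_derivative 2 * (v t \<bullet> vt)) (at t)"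
  proof -
    have "((\<lambda>t. v t \<bullet> v t) has_derivative (\<lambda>h. v t \<bullet> (h *\<^sub>R vt) + (h *\<^sub>R vt) \<bullet> v t)) (at t)"
      using has_derivative_inner[OF dv[unfolded has_vector_derivative_def] dv[unfolded has_vector_derivative_def]] .
    moreover have "(\<lambda>h. v t \<bullet> (h *\<^sub>R vt) + (h *\<^sub>R vt) \<bullet> v t) = (*) (2 * (v t \<bullet> vt))"
      by (rule ext) (simp add: inner_commute algebra_simps)
    ultimately show ?thesis unfolding has_field_derivative_def by simp
  qed
  have duu: "((\<lambda>t. u (r t) (s t)) has_real_derivative rt * Ur + st * Us) (at t)"
  proof -
    have p: "((\<lambda>t. (r t, s t)) has_derivative (\<lambda>h. (rt * h, st * h))) (at t)"
      using has_derivative_Pair[OF dr[unfolded has_field_derivative_def] ds[unfolded has_field_derivative_def]] .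
    have "(((\<lambda>(a, b). u a b) \<circ> (\<lambda>t. (r t, s t))) has_derivative ((\<lambda>(h, k). h * Ur + k * Us) \<circ> (\<lambda>h. (rt * h, st * h)))) (at t)"
      by (rule diff_chain_at[OF p du])
    moreover have "((\<lambda>(h, k). h * Ur + k * Us) \<circ> (\<lambda>h. (rt * h, st * h))) = (*) (rt * Ur + st * Us)"
      by (rule ext) (simp add: algebra_simps)
    ultimately show ?thesis unfolding has_field_derivative_def by (simp add: o_def)
  qed
  have h2: "((\<lambda>t. (1/2) * r t * (v t \<bullet> v t)) has_real_derivative
      (1/2) * r t * (2 * (v t \<bullet> vt)) + (1/2) * rt * (v t \<bullet> v t)) (at t)"
    using DERIV_mult'[OF DERIV_cmult[OF dr, of "1/2"] dvv] .
  have h3: "((\<lambda>t. r t * u (r t) (s t)) has_real_derivative r t * (rt * Ur + st * Us) + rt * u (r t) (s t)) (at t)"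
    using DERIV_mult'[OF dr duu] .
  show ?thesis
    by (rule DERIV_cong[OF DERIV_add[OF h2 h3]]) (simp add: algebra_simps)
qed

theorem proposition1:
  fixes \<Omega> U :: "(real^3) set" and I :: "real set"
    and \<rho> s :: "real \<Rightarrow> real^3 \<Rightarrow> real" and v :: "real \<Rightarrow> real^3 \<Rightarrow> real^3"
    and u :: "real \<Rightarrow> real \<Rightarrow> real" and \<mu> \<kappa> :: real and K :: "real^3^3"
    and \<sigma> :: "(real^3) measure" and n :: "real^3 \<Rightarrow> real^3"
  assumes dom: "open \<Omega>" "connected \<Omega>" "bounded \<Omega>"
    and nbhd: "open U" "closure \<Omega> \<subseteq> U"
    and times: "open I"
    and bdry: "space \<sigma> = frontier \<Omega>" "\<forall>x\<in>frontier \<Omega>. norm (n x) = 1"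
    and gauss: "\<forall>F :: real^3 \<Rightarrow> real^3. C1_on U F \<longrightarrow>
                  (divg F integrable_on \<Omega> \<and> integrable \<sigma> (\<lambda>x. F x \<bullet> n x) \<and>
                   integral \<Omega> (divg F) = (\<integral>x. F x \<bullet> n x \<partial>\<sigma>))"
    and K_nonneg: "\<forall>a. 0 \<le> a \<bullet> (K *v a)"
    and u_reg: "C3_on ({0<..} \<times> UNIV) (\<lambda>(a, b). u a b)"
    and reg: "C2_on (I \<times> U) (\<lambda>(t, x). \<rho> t x)" "C2_on (I \<times> U) (\<lambda>(t, x). v t x)"
             "C2_on (I \<times> U) (\<lambda>(t, x). s t x)"
    and pos: "\<forall>t\<in>I. \<forall>x\<in>U. 0 < \<rho> t x \<and> 0 < temp u (\<rho> t) (s t) x"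
    and eq_rho: "\<forall>t\<in>I. \<forall>x\<in>\<Omega>. ((\<lambda>t. \<rho> t x) has_real_derivative rhs_rho (\<rho> t) (v t) x) (at t)"
    and eq_v: "\<forall>t\<in>I. \<forall>x\<in>\<Omega>.
                 ((\<lambda>t. v t x) has_vector_derivative rhs_v u \<mu> \<kappa> (\<rho> t) (v t) (s t) x) (at t)"
    and eq_s: "\<forall>t\<in>I. \<forall>x\<in>\<Omega>.
                 ((\<lambda>t. s t x) has_real_derivative rhs_s u \<mu> \<kappa> K (\<rho> t) (v t) (s t) x) (at t)"
  shows "(\<forall>t\<in>I. \<forall>x\<in>\<Omega>.
            ((\<lambda>t. (\<rho> t x, v t x, s t x)) has_vector_derivative
               J_op u \<mu> \<kappa> K (\<rho> t) (v t) (s t)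
                 (eff_rho u (\<rho> t) (v t) (s t)) (eff_v (\<rho> t) (v t)) (eff_s u (\<rho> t) (s t)) x) (at t))
       \<and> (\<forall>t\<in>I.
            let T = temp u (\<rho> t) (s t); \<tau> = visc \<mu> \<kappa> (v t); qs = entflux K T;
                e\<^sub>\<rho> = eff_rho u (\<rho> t) (v t) (s t); e\<^sub>v = eff_v (\<rho> t) (v t)
            in ((\<lambda>t. Ham \<Omega> u (\<rho> t) (v t) (s t)) has_real_derivative
                  bnd_pairing \<sigma> e\<^sub>\<rho> \<tau> T
                    (\<lambda>x. - (e\<^sub>v x \<bullet> n x)) (\<lambda>x. - outer (v t x) (n x)) (\<lambda>x. - (qs x \<bullet> n x))) (at t)
             \<and> bnd_pairing \<sigma> e\<^sub>\<rho> \<tau> T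
                 (\<lambda>x. - (e\<^sub>v x \<bullet> n x)) (\<lambda>x. - outer (v t x) (n x)) (\<lambda>x. - (qs x \<bullet> n x))
               = - (\<integral>x. e\<^sub>\<rho> x * (e\<^sub>v x \<bullet> n x) + ddot (\<tau> x) (outer (v t x) (n x))
                        + T x * (qs x \<bullet> n x) \<partial>\<sigma>))"
proof -
  have U: "open U" using nbhd(1) .
  have OU: "\<Omega> \<subseteq> U" using nbhd(2) closure_subset by blast
  define W :: "(real \<times> real) set" where "W = {0<..} \<times> UNIV"
  have Wo: "open W" unfolding W_def by (intro open_Times) auto
  define gu where "gu = (\<lambda>(a::real, b::real). u a b)"
  have gu3: "C3_on W gu" using u_reg unfolding W_def gu_def .
  have gu2: "C2_on W gu" by (rule C3_fd(2)[OF Wo gu3])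
  define Ur where "Ur p = frechet_derivative gu (at p) (1, 0)" for p
  define Us where "Us p = frechet_derivative gu (at p) (0, 1)" for p
  have Ur2: "C2_on W Ur" unfolding Ur_def by (rule C3_fd(1)[OF Wo gu3])
  have Us2: "C2_on W Us" unfolding Us_def by (rule C3_fd(1)[OF Wo gu3])
  have gud: "gu differentiable (at p)" if "p \<in> W" for p
    using C1_diff[OF C2_C1[OF gu2] that] .
  have gupart: "u_rho u a b = Ur (a, b)" "u_s u a b = Us (a, b)"
      "(gu has_derivative (\<lambda>(h, k). h * Ur (a, b) + k * Us (a, b))) (at (a, b))"
    if "a > 0" for a b
  proof -
    have ab: "(a, b) \<in> W" using that unfolding W_def by auto
    note up = u_partials[OF Wo ab gud[OF ab, unfolded gu_def]]
    show "u_rho u a b = Ur (a, b)" "u_s u a b = Us (a, b)"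
      using up(2,3) unfolding Ur_def Us_def gu_def by auto
    show "(gu has_derivative (\<lambda>(h, k). h * Ur (a, b) + k * Us (a, b))) (at (a, b))"
      using up(1) unfolding Ur_def Us_def gu_def .
  qed
  define Pr where "Pr = (\<lambda>(t, x). \<rho> t x)"
  define Pv where "Pv = (\<lambda>(t, x). v t x)"
  define Ps where "Ps = (\<lambda>(t, x). s t x)"
  have Pr1: "C1_on (I \<times> U) Pr" using C2_C1[OF reg(1)] unfolding Pr_def .
  have Pv1: "C1_on (I \<times> U) Pv" using C2_C1[OF reg(2)] unfolding Pv_def .
  have Ps1: "C1_on (I \<times> U) Ps" using C2_C1[OF reg(3)] unfolding Ps_def .
  have IU: "open (I \<times> U)" using times U by (rule open_Times)
  have slR: "C2_on U (\<rho> t)" if "t \<in> I" for t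
    using C2_slice[OF U reg(1) that] by simp
  have slV: "C2_on U (v t)" if "t \<in> I" for t
    using C2_slice[OF U reg(2) that] by simp
  have slS: "C2_on U (s t)" if "t \<in> I" for t
    using C2_slice[OF U reg(3) that] by simp
  have posR: "0 < \<rho> t y" and posT: "0 < temp u (\<rho> t) (s t) y" if "t \<in> I" "y \<in> U" for t y
    using pos that by auto

  have P1: "\<forall>t\<in>I. \<forall>x\<in>\<Omega>.
            ((\<lambda>t. (\<rho> t x, v t x, s t x)) has_vector_derivative
               J_op u \<mu> \<kappa> K (\<rho> t) (v t) (s t)
                 (eff_rho u (\<rho> t) (v t) (s t)) (eff_v (\<rho> t) (v t)) (eff_s u (\<rho> t) (s t)) x) (at t)"
  proof (intro ballI)
    fix t x assume t: "t \<in> I" and x: "x \<in> \<Omega>"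
    have xU: "x \<in> U" using x OU by blast
    have "((\<lambda>t. (\<rho> t x, v t x, s t x)) has_vector_derivative
          (rhs_rho (\<rho> t) (v t) x, rhs_v u \<mu> \<kappa> (\<rho> t) (v t) (s t) x, rhs_s u \<mu> \<kappa> K (\<rho> t) (v t) (s t) x)) (at t)"
      using eq_rho eq_v eq_s t x
      by (intro has_vector_derivative_Pair) (auto simp: has_real_derivative_iff_has_vector_derivative)
    moreover have "J_op u \<mu> \<kappa> K (\<rho> t) (v t) (s t)
                 (eff_rho u (\<rho> t) (v t) (s t)) (eff_v (\<rho> t) (v t)) (eff_s u (\<rho> t) (s t)) x
        = (rhs_rho (\<rho> t) (v t) x, rhs_v u \<mu> \<kappa> (\<rho> t) (v t) (s t) x, rhs_s u \<mu> \<kappa> K (\<rho> t) (v t) (s t) x)"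
      by (rule part1[OF U xU]) (use posR posT t in auto)
    ultimately show "((\<lambda>t. (\<rho> t x, v t x, s t x)) has_vector_derivative
               J_op u \<mu> \<kappa> K (\<rho> t) (v t) (s t)
                 (eff_rho u (\<rho> t) (v t) (s t)) (eff_v (\<rho> t) (v t)) (eff_s u (\<rho> t) (s t)) x) (at t)"
      by simp
  qed

  have P2: "let T = temp u (\<rho> t0) (s t0); \<tau> = visc \<mu> \<kappa> (v t0); qs = entflux K T;
                e\<^sub>\<rho> = eff_rho u (\<rho> t0) (v t0) (s t0); e\<^sub>v = eff_v (\<rho> t0) (v t0)
            in ((\<lambda>t. Ham \<Omega> u (\<rho> t) (v t) (s t)) has_real_derivative
                  bnd_pairing \<sigma> e\<^sub>\<rho> \<tau> T
                    (\<lambda>x. - (e\<^sub>v x \<bullet> n x)) (\<lambda>x. - outer (v t0 x) (n x)) (\<lambda>x. - (qs x \<bullet> n x))) (at t0)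
             \<and> bnd_pairing \<sigma> e\<^sub>\<rho> \<tau> T
                 (\<lambda>x. - (e\<^sub>v x \<bullet> n x)) (\<lambda>x. - outer (v t0 x) (n x)) (\<lambda>x. - (qs x \<bullet> n x))
               = - (\<integral>x. e\<^sub>\<rho> x * (e\<^sub>v x \<bullet> n x) + ddot (\<tau> x) (outer (v t0 x) (n x))
                        + T x * (qs x \<bullet> n x) \<partial>\<sigma>)"
    if t0: "t0 \<in> I" for t0
  proof -
    define R where "R = \<rho> t0"
    define V where "V = v t0"
    define S where "S = s t0"
    define T where "T = temp u R S"
    define \<tau> where "\<tau> = visc \<mu> \<kappa> V"
    define qs where "qs = entflux K T"
    define er where "er = eff_rho u R V S"
    define ev where "ev = eff_v R V"
    define F where "F = Fld u \<mu> \<kappa> K R V S"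
    have R2: "C2_on U R" and V2: "C2_on U V" and S2: "C2_on U S"
      unfolding R_def V_def S_def using slR slV slS t0 by auto
    have Rp: "\<And>y. y \<in> U \<Longrightarrow> R y > 0" and Tp: "\<And>y. y \<in> U \<Longrightarrow> temp u R S y > 0"
      unfolding R_def S_def using posR posT t0 by auto
    have EP1: "C1_on U (Fld u \<mu> \<kappa> K R V S)" if x: "x \<in> U" for x
      by (rule energy_pointwise(1)[OF U R2 S2 V2 _ _ u_reg x]) (use Rp Tp in auto)
    have EP2: "eff_rho u R V S x * rhs_rho R V x + eff_v R V x \<bullet> rhs_v u \<mu> \<kappa> R V S x
         + eff_s u R S x * rhs_s u \<mu> \<kappa> K R V S x = - divg (Fld u \<mu> \<kappa> K R V S) x" if x: "x \<in> U" for x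
      by (rule energy_pointwise(2)[OF U R2 S2 V2 _ _ u_reg x]) (use Rp Tp in auto)
    have FC1: "C1_on U F"
    proof (cases "U = {}")
      case True then show ?thesis by (simp add: C1_on_def)
    next
      case False then obtain x0 where "x0 \<in> U" by blast
      then show ?thesis unfolding F_def by (rule EP1)
    qed
    note G = gauss[rule_format, OF FC1]
    have Fn2: "\<And>y. er y * (- (ev y \<bullet> n y)) + ddot (\<tau> y) (- outer (V y) (n y)) + T y * (- (qs y \<bullet> n y))
             = - (er y * (ev y \<bullet> n y) + ddot (\<tau> y) (outer (V y) (n y)) + T y * (qs y \<bullet> n y))"
      by (simp add: ddot_def sum_negf algebra_simps)
    have Fn: "\<And>y. er y * (- (ev y \<bullet> n y)) + ddot (\<tau> y) (- outer (V y) (n y)) + T y * (- (qs y \<bullet> n y))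
             = - (F y \<bullet> n y)"
      unfolding Fn2 ddot_outer
      unfolding F_def Fld_def er_def[symmetric] ev_def[symmetric] \<tau>_def[symmetric] T_def[symmetric] qs_def[symmetric]
      by (simp add: inner_add_left)
    have BP: "bnd_pairing \<sigma> er \<tau> T (\<lambda>x. - (ev x \<bullet> n x)) (\<lambda>x. - outer (V x) (n x)) (\<lambda>x. - (qs x \<bullet> n x))
        = - (\<integral>x. F x \<bullet> n x \<partial>\<sigma>)"
      unfolding bnd_pairing_def Fn by (rule integral_minus)
    have BP2: "bnd_pairing \<sigma> er \<tau> T (\<lambda>x. - (ev x \<bullet> n x)) (\<lambda>x. - outer (V x) (n x)) (\<lambda>x. - (qs x \<bullet> n x))
        = - (\<integral>x. er x * (ev x \<bullet> n x) + ddot (\<tau> x) (outer (V x) (n x)) + T x * (qs x \<bullet> n x) \<partial>\<sigma>)"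
      unfolding bnd_pairing_def Fn2 by (rule integral_minus)

    obtain \<delta> where \<delta>: "\<delta> > 0" "ball t0 \<delta> \<subseteq> I" using times t0 open_contains_ball by blast
    define rt where "rt p = frechet_derivative Pr (at p) (1, 0)" for p
    define vt where "vt p = frechet_derivative Pv (at p) (1, 0)" for p
    define st where "st p = frechet_derivative Ps (at p) (1, 0)" for p
    define hf where "hf \<tau> y = (1/2) * \<rho> \<tau> y * (v \<tau> y \<bullet> v \<tau> y) + \<rho> \<tau> y * u (\<rho> \<tau> y) (s \<tau> y)" for \<tau> y
    define Dt where "Dt p = ((1/2) * (Pv p \<bullet> Pv p) + gu (Pr p, Ps p) + Pr p * Ur (Pr p, Ps p)) * rt p
        + (Pr p *\<^sub>R Pv p) \<bullet> vt p + Pr p * Us (Pr p, Ps p) * st p" for p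
    have b10: "(1::real, 0::real^3) \<in> Basis" by (simp add: Basis_prod_def)
    have crt: "continuous_on (I \<times> U) rt" unfolding rt_def using Pr1 b10 unfolding C1_iff[OF IU] by blast
    have cvt: "continuous_on (I \<times> U) vt" unfolding vt_def using Pv1 b10 unfolding C1_iff[OF IU] by blast
    have cst: "continuous_on (I \<times> U) st" unfolding st_def using Ps1 b10 unfolding C1_iff[OF IU] by blast
    have cPr: "continuous_on (I \<times> U) Pr" by (rule C1_cont[OF Pr1])
    have cPv: "continuous_on (I \<times> U) Pv" by (rule C1_cont[OF Pv1])
    have cPs: "continuous_on (I \<times> U) Ps" by (rule C1_cont[OF Ps1])
    have cP: "continuous_on (I \<times> U) (\<lambda>p. (Pr p, Ps p))" by (intro continuous_on_Pair cPr cPs)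
    have imP: "(\<lambda>p. (Pr p, Ps p)) ` (I \<times> U) \<subseteq> W"
      using posR unfolding W_def Pr_def by auto
    have cg: "continuous_on (I \<times> U) (\<lambda>p. gu (Pr p, Ps p))"
      by (rule continuous_on_compose2[OF C1_cont[OF C2_C1[OF gu2]] cP imP])
    have cUr: "continuous_on (I \<times> U) (\<lambda>p. Ur (Pr p, Ps p))"
      by (rule continuous_on_compose2[OF C1_cont[OF C2_C1[OF Ur2]] cP imP])
    have cUs: "continuous_on (I \<times> U) (\<lambda>p. Us (Pr p, Ps p))"
      by (rule continuous_on_compose2[OF C1_cont[OF C2_C1[OF Us2]] cP imP])
    have cDt: "continuous_on (I \<times> U) Dt"
      unfolding Dt_def by (intro continuous_intros crt cvt cst cPr cPv cPs cg cUr cUs)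
    have chf: "continuous_on (I \<times> U) (\<lambda>p. (1/2) * Pr p * (Pv p \<bullet> Pv p) + Pr p * gu (Pr p, Ps p))"
      by (intro continuous_intros cPr cPv cPs cg)
    have slc: "continuous_on (closure \<Omega>) (\<lambda>y. g (\<tau>, y))" if "continuous_on (I \<times> U) g" "\<tau> \<in> I" for g :: "real \<times> (real^3) \<Rightarrow> real" and \<tau>
      by (rule continuous_on_compose2[OF that(1)]) (use that(2) nbhd(2) in \<open>auto intro!: continuous_intros\<close>)
    have Om: "\<Omega> \<in> lmeasurable" by (rule lmeasurable_open[OF dom(3) dom(1)])
    have cK: "compact (closure \<Omega>)" using dom(3) by simp
    have dhf: "((\<lambda>\<tau>. hf \<tau> y) has_real_derivative Dt (\<tau>, y)) (at \<tau>)" if "\<tau> \<in> I" "y \<in> U" for \<tau> y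
    proof -
      have dr: "((\<lambda>\<tau>. \<rho> \<tau> y) has_real_derivative rt (\<tau>, y)) (at \<tau>)"
        using tslice[OF Pr1 that] unfolding rt_def has_real_derivative_iff_has_vector_derivative by (simp add: Pr_def)
      have dv: "((\<lambda>\<tau>. v \<tau> y) has_vector_derivative vt (\<tau>, y)) (at \<tau>)"
        using tslice[OF Pv1 that] unfolding vt_def by (simp add: Pv_def)
      have ds: "((\<lambda>\<tau>. s \<tau> y) has_real_derivative st (\<tau>, y)) (at \<tau>)"
        using tslice[OF Ps1 that] unfolding st_def has_real_derivative_iff_has_vector_derivative by (simp add: Ps_def)
      have du: "((\<lambda>(a, b). u a b) has_derivative (\<lambda>(h, k). h * Ur (\<rho> \<tau> y, s \<tau> y) + k * Us (\<rho> \<tau> y, s \<tau> y))) (at (\<rho> \<tau> y, s \<tau> y))"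
        using gupart(3)[OF posR[OF that]] unfolding gu_def .
      show ?thesis
        using hf_deriv[OF dr ds dv du] unfolding hf_def Dt_def by (simp add: Pr_def Pv_def Ps_def gu_def)
    qed
    have Ham_eq: "(\<lambda>t. Ham \<Omega> u (\<rho> t) (v t) (s t)) = (\<lambda>t. integral \<Omega> (hf t))"
      unfolding Ham_def hf_def ..
    have LB: "((\<lambda>t. integral \<Omega> (hf t)) has_real_derivative integral \<Omega> (\<lambda>y. Dt (t0, y))) (at t0)"
    proof (rule leibniz_real[where U="ball t0 \<delta>" and K="closure \<Omega>"])
      show "open (ball t0 \<delta>)" "convex (ball t0 \<delta>)" "t0 \<in> ball t0 \<delta>" using \<delta> by auto
      show "compact (closure \<Omega>)" "\<Omega> \<subseteq> closure \<Omega>" "\<Omega> \<in> lmeasurable" using cK Om closure_subset by auto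
      show "((\<lambda>x. hf x t) has_real_derivative Dt (x, t)) (at x)" if "x \<in> ball t0 \<delta>" "t \<in> \<Omega>" for x t
        using dhf that \<delta> OU by blast
      show "hf x integrable_on \<Omega>" if "x \<in> ball t0 \<delta>" for x
      proof (rule cont_integrable[OF Om cK closure_subset])
        have xI: "x \<in> I" using that \<delta> by auto
        show "continuous_on (closure \<Omega>) (hf x)"
          using slc[OF chf xI] unfolding hf_def[abs_def] by (simp add: Pr_def Pv_def Ps_def gu_def)
      qed
      show "(\<lambda>y. Dt (t0, y)) integrable_on \<Omega>"
        by (rule cont_integrable[OF Om cK closure_subset slc[OF cDt t0]])
      show "continuous_on (ball t0 \<delta> \<times> closure \<Omega>) (\<lambda>(x, t). Dt (x, t))"
        using continuous_on_subset[OF cDt] \<delta> nbhd(2) by (simp add: case_prod_eta) (meson Sigma_mono)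
    qed
    have Dteq: "Dt (t0, y) = - divg F y" if y: "y \<in> \<Omega>" for y
    proof -
      have yU: "y \<in> U" using y OU by blast
      have r1: "rt (t0, y) = rhs_rho R V y"
      proof -
        have "((\<lambda>\<tau>. \<rho> \<tau> y) has_real_derivative rt (t0, y)) (at t0)"
          using tslice[OF Pr1 t0 yU] unfolding rt_def has_real_derivative_iff_has_vector_derivative by (simp add: Pr_def)
        then show ?thesis using eq_rho t0 y DERIV_unique unfolding R_def V_def by blast
      qed
      have v1: "vt (t0, y) = rhs_v u \<mu> \<kappa> R V S y"
      proof -
        have "((\<lambda>\<tau>. v \<tau> y) has_vector_derivative vt (t0, y)) (at t0)"
          using tslice[OF Pv1 t0 yU] unfolding vt_def by (simp add: Pv_def)
        then show ?thesis using eq_v t0 y vector_derivative_unique_at unfolding R_def V_def S_def by blast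
      qed
      have s1: "st (t0, y) = rhs_s u \<mu> \<kappa> K R V S y"
      proof -
        have "((\<lambda>\<tau>. s \<tau> y) has_real_derivative st (t0, y)) (at t0)"
          using tslice[OF Ps1 t0 yU] unfolding st_def has_real_derivative_iff_has_vector_derivative by (simp add: Ps_def)
        then show ?thesis using eq_s t0 y DERIV_unique unfolding R_def V_def S_def by blast
      qed
      have Ry: "R y > 0" using Rp[OF yU] .
      have e1: "(1/2) * (V y \<bullet> V y) + gu (R y, S y) + R y * Ur (R y, S y) = eff_rho u R V S y"
        unfolding eff_rho_def enth_def pres_def gupart(1)[OF Ry] using Ry
        by (simp add: gu_def power2_eq_square)
      have e3: "R y * Us (R y, S y) = eff_s u R S y"
        unfolding eff_s_def temp_def gupart(2)[OF Ry] ..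
      have "Dt (t0, y) = eff_rho u R V S y * rhs_rho R V y + eff_v R V y \<bullet> rhs_v u \<mu> \<kappa> R V S y
         + eff_s u R S y * rhs_s u \<mu> \<kappa> K R V S y"
        unfolding Dt_def r1 v1 s1 e1[symmetric] e3[symmetric]
        by (simp add: Pr_def Pv_def Ps_def R_def V_def S_def eff_v_def)
      also have "\<dots> = - divg F y" unfolding F_def by (rule EP2[OF yU])
      finally show ?thesis .
    qed
    have "integral \<Omega> (\<lambda>y. Dt (t0, y)) = integral \<Omega> (\<lambda>y. - divg F y)"
      by (rule Henstock_Kurzweil_Integration.integral_cong) (rule Dteq)
    also have "\<dots> = - (\<integral>x. F x \<bullet> n x \<partial>\<sigma>)" using G by simp
    finally have "integral \<Omega> (\<lambda>y. Dt (t0, y)) = bnd_pairing \<sigma> er \<tau> T (\<lambda>x. - (ev x \<bullet> n x)) (\<lambda>x. - outer (V x) (n x)) (\<lambda>x. - (qs x \<bullet> n x))"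
      using BP by simp
    with LB Ham_eq have D: "((\<lambda>t. Ham \<Omega> u (\<rho> t) (v t) (s t)) has_real_derivative
        bnd_pairing \<sigma> er \<tau> T (\<lambda>x. - (ev x \<bullet> n x)) (\<lambda>x. - outer (V x) (n x)) (\<lambda>x. - (qs x \<bullet> n x))) (at t0)"
      by simp
    show ?thesis
      unfolding Let_def using D BP2
      unfolding R_def[symmetric] V_def[symmetric] S_def[symmetric] T_def[symmetric] \<tau>_def[symmetric]
        qs_def[symmetric] er_def[symmetric] ev_def[symmetric]
      by blast
  qed
  show ?thesis using P1 P2 by blast
qed

end
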